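(* Let $R$ be a commutative integral domain with identity, $\Gamma$ a discrete group, and $(\mathcal{G},c)\in\mathcal{C}_{R,\Gamma}$. Let $T=\{((m,n),g,x): g\in\Gamma,\ (m,n)\in N_R(\mathcal{G})_g,\ x\in s(\operatorname{supp}(m))\}$. (1) The relation on $T$ given by $((m_1,n_1),g_1,x_1)\sim((m_2,n_2),g_2,x_2)$ iff $x_1=x_2$ and there is a compact open neighbourhood $U\subseteq\mathcal{G}^0$ of $x_1$ with $m_1 1_U n_2\in D_R(\mathcal{G})$ is an equivalence relation. (2) Let $W_\mathcal{G}=T/\sim$. There is a bijection $\psi_\mathcal{G}:W_\mathcal{G}\to\mathcal{G}$ such that $\psi_\mathcal{G}([((m,n),g,x)])\in\operatorname{supp}(m)\cap s^{-1}(\{x\})$ for all $((m,n),g,x)\in T$, and such that $\psi_\mathcal{G}([((1_A,1_{A^{-1}}),c(\eta),s(\eta))])=\eta$ for every $\eta\in\mathcal{G}$ and every compact open bisection $A$ containing $\eta$ with $c(A)=\{c(\eta)\}$. (3) For $[((m,n),g,x)]\in W_\mathcal{G}$, $\psi_\mathcal{G}([((m,n),g,x)])^{-1}=\psi_\mathcal{G}([((n,m),g^{-1},\alpha_{\operatorname{supp}(m)}(x))])$. (4) For $i=1,2$ let $[((m_i,n_i),g_i,x_i)]\in W_\mathcal{G}$ and $\eta_i=\psi_\mathcal{G}([((m_i,n_i),g_i,x_i)])$. Then $(\eta_1,\eta_2)$ is composable iff $x_1=\alpha_{\operatorname{supp}(m_2)}(x_2)$, in which case $((m_1m_2,n_2n_1),g_1g_2,x_2)\in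 T$ and $\eta_1\eta_2=\psi_\mathcal{G}([((m_1m_2,n_2n_1),g_1g_2,x_2)])$. (5) $c(\psi_\mathcal{G}([((m,n),g,x)]))=g$ for all $[((m,n),g,x)]\in W_\mathcal{G}$. (6) If $g\in\Gamma$ and $A\subseteq c^{-1}(g)$ is a compact open bisection, then $\psi_\mathcal{G}^{-1}(A)=\{[((m,n),g,x)]\in W_\mathcal{G}:\operatorname{supp}(m)\subseteq A\}$.
   Context: Ample Hausdorff groupoid: Hausdorff topological groupoid with range/source maps $r,s$ local homeomorphisms and unit space $\mathcal{G}^0$ having a basis of compact open sets; a bisection is a subset on which $r,s$ restrict to homeomorphisms onto open subsets of $\mathcal{G}^0$; for an open bisection $A$, $\alpha_A:s(A)\to r(A)$ is the homeomorphism $\alpha_A(s(\eta))=r(\eta)$, $\eta\in A$. $\mathcal{G}_x^x=\{\eta:s(\eta)=r(\eta)=x\}$. A continuous cocycle is a continuous groupoid homomorphism $c:\mathcal{G}\to\Gamma$. $A_R(\mathcal{G})$: locally constant compactly supported functions $\mathcal{G}\to R$ with pointwise addition and convolution $(f*g)(\eta)=\sum_{\alpha\beta=\eta}f(\alpha)g(\beta)$; $D_R(\mathcal{G})$: those supported in $\mathcal{G}^0$; $\operatorname{supp}(f)=\{\eta:f(\eta)\neq0\}$; $1_U$ the indicator of $U$; $A_R(\mathcal{G})_g=\{f:\operatorname{supp}(f)\subseteq c^{-1}(g)\}$. $\mathcal{C}_{R,\Gamma}$: pairs $(\mathcal{G},c)$ with $\mathcal{G}$ ample Hausdorff, $c:\mathcal{G}\to\Gamma$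 a continuous cocycle, and a dense $X\subseteq\mathcal{G}^0$ such that the group ring $R(c^{-1}(e)\cap\mathcal{G}_x^x)$ has no zero-divisors and only trivial units (units of the form $uh$, $u\in R$, $h$ in the group) for all $x\in X$. A normaliser is a pair $(m,n)\in A_R(\mathcal{G})^2$ with $mD_R(\mathcal{G})n\cup nD_R(\mathcal{G})m\subseteq D_R(\mathcal{G})$, $mnm=m$, $nmn=n$; $N_R(\mathcal{G})_g$ is the set of normalisers in $A_R(\mathcal{G})_g\times A_R(\mathcal{G})_{g^{-1}}$. (For $(m,n)\in N_R(\mathcal{G})_g$, $\operatorname{supp}(m)$ is a compact open bisection.) *)

theory Defs
  imports "HOL-Analysis.Analysis"
begin

text \<open>A groupoid whose set of arrows is the whole (topological) type 'g,
  given by range, source, (partial) multiplication and inverse.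
  The product mu a b is only meaningful when sr a = rg b.\<close>

record 'g gpd =
  rg :: "'g \<Rightarrow> 'g"
  sr :: "'g \<Rightarrow> 'g"
  mu :: "'g \<Rightarrow> 'g \<Rightarrow> 'g"
  iv :: "'g \<Rightarrow> 'g"

definition unit_space :: "'g gpd \<Rightarrow> 'g set" where
  "unit_space G = range (rg G)"

definition groupoid :: "'g gpd \<Rightarrow> bool" where
  "groupoid G \<longleftrightarrow>
     (\<forall>a. rg G (rg G a) = rg G a \<and> sr G (rg G a) = rg G a
          \<and> rg G (sr G a) = sr G a \<and> sr G (sr G a) = sr G a)
   \<and> (\<forall>a b. sr G a = rg G b \<longrightarrow> rg G (mu G a b) = rg G a \<and> sr G (mu G a b) = sr G b)
   \<and> (\<forall>a b d. sr G a = rg G b \<and> sr G b = rg G d \<longrightarrow>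
          mu G (mu G a b) d = mu G a (mu G b d))
   \<and> (\<forall>a. mu G (rg G a) a = a \<and> mu G a (sr G a) = a)
   \<and> (\<forall>a. sr G (iv G a) = rg G a \<and> rg G (iv G a) = sr G a
          \<and> mu G a (iv G a) = rg G a \<and> mu G (iv G a) a = sr G a)"

definition local_homeo :: "('g::topological_space) gpd \<Rightarrow> ('g \<Rightarrow> 'g) \<Rightarrow> bool" where
  "local_homeo G f \<longleftrightarrow>
     (\<forall>a. \<exists>U. open U \<and> a \<in> U \<and> openin (top_of_set (unit_space G)) (f ` U)
          \<and> homeomorphism U (f ` U) f (inv_into U f))"

definition ample_hausdorff :: "('g::t2_space) gpd \<Rightarrow> bool" where
  "ample_hausdorff G \<longleftrightarrow>
     groupoid G
   \<and> continuous_on {p. sr G (fst p) = rg G (snd p)} (\<lambda>p. mu G (fst p) (snd p))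
   \<and> continuous_on UNIV (iv G)
   \<and> local_homeo G (rg G) \<and> local_homeo G (sr G)
   \<and> (\<forall>V x. openin (top_of_set (unit_space G)) V \<and> x \<in> V \<longrightarrow>
        (\<exists>K. compact K \<and> openin (top_of_set (unit_space G)) K \<and> x \<in> K \<and> K \<subseteq> V))"

definition bisection :: "('g::topological_space) gpd \<Rightarrow> 'g set \<Rightarrow> bool" where
  "bisection G B \<longleftrightarrow>
     homeomorphism B (rg G ` B) (rg G) (inv_into B (rg G))
   \<and> homeomorphism B (sr G ` B) (sr G) (inv_into B (sr G))
   \<and> openin (top_of_set (unit_space G)) (rg G ` B)
   \<and> openin (top_of_set (unit_space G)) (sr G ` B)"

definition cobis :: "('g::topological_space) gpd \<Rightarrow> 'g set \<Rightarrow> bool" where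
  "cobis G A \<longleftrightarrow> compact A \<and> open A \<and> bisection G A"

definition alpha :: "'g gpd \<Rightarrow> 'g set \<Rightarrow> 'g \<Rightarrow> 'g" where
  "alpha G A y = rg G (THE \<eta>. \<eta> \<in> A \<and> sr G \<eta> = y)"

text \<open>Continuous cocycle into a discrete group (written additively).\<close>
definition cont_cocycle :: "('g::topological_space) gpd \<Rightarrow> ('g \<Rightarrow> 'a::group_add) \<Rightarrow> bool" where
  "cont_cocycle G c \<longleftrightarrow>
     (\<forall>a b. sr G a = rg G b \<longrightarrow> c (mu G a b) = c a + c b)
   \<and> (\<forall>g. open (c -` {g}))"

definition fsupp :: "('g \<Rightarrow> 'r::zero) \<Rightarrow> 'g set" where
  "fsupp f = {x. f x \<noteq> 0}"

definition steinberg :: "('g::topological_space) gpd \<Rightarrow> ('g \<Rightarrow> 'r::comm_ring_1) set" where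
  "steinberg G = {f. (\<forall>a. \<exists>U. open U \<and> a \<in> U \<and> (\<forall>b\<in>U. f b = f a)) \<and> compact (fsupp f)}"

definition conv :: "'g gpd \<Rightarrow> ('g \<Rightarrow> 'r::comm_ring_1) \<Rightarrow> ('g \<Rightarrow> 'r) \<Rightarrow> 'g \<Rightarrow> 'r" where
  "conv G f g \<eta> = (\<Sum>p \<in> {(a,b). sr G a = rg G b \<and> mu G a b = \<eta> \<and> f a \<noteq> 0 \<and> g b \<noteq> 0}.
                       f (fst p) * g (snd p))"

definition diag :: "('g::topological_space) gpd \<Rightarrow> ('g \<Rightarrow> 'r::comm_ring_1) set" where
  "diag G = {f \<in> steinberg G. fsupp f \<subseteq> unit_space G}"

definition homog :: "('g::topological_space) gpd \<Rightarrow> ('g \<Rightarrow> 'a) \<Rightarrow> 'a \<Rightarrow> ('g \<Rightarrow> 'r::comm_ring_1) set" where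
  "homog G c g = {f \<in> steinberg G. fsupp f \<subseteq> c -` {g}}"

definition normaliser :: "('g::topological_space) gpd \<Rightarrow> ('g \<Rightarrow> 'r::comm_ring_1) \<Rightarrow> ('g \<Rightarrow> 'r) \<Rightarrow> bool" where
  "normaliser G m n \<longleftrightarrow> m \<in> steinberg G \<and> n \<in> steinberg G
     \<and> (\<forall>d \<in> diag G. conv G (conv G m d) n \<in> diag G \<and> conv G (conv G n d) m \<in> diag G)
     \<and> conv G (conv G m n) m = m \<and> conv G (conv G n m) n = n"

definition normalisers :: "('g::topological_space) gpd \<Rightarrow> ('g \<Rightarrow> 'a::group_add) \<Rightarrow> 'a
     \<Rightarrow> (('g \<Rightarrow> 'r::comm_ring_1) \<times> ('g \<Rightarrow> 'r)) set" where
  "normalisers G c g = {(m,n). normaliser G m n \<and> m \<in> homog G c g \<and> n \<in> homog G c (- g)}"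

definition Tset :: "('g::topological_space) gpd \<Rightarrow> ('g \<Rightarrow> 'a::group_add)
     \<Rightarrow> ((('g \<Rightarrow> 'r::comm_ring_1) \<times> ('g \<Rightarrow> 'r)) \<times> 'a \<times> 'g) set" where
  "Tset G c = {((m,n),g,x). (m,n) \<in> normalisers G c g \<and> x \<in> sr G ` fsupp m}"

definition Trel :: "('g::topological_space) gpd \<Rightarrow> ('g \<Rightarrow> 'a::group_add)
     \<Rightarrow> (((('g \<Rightarrow> 'r::comm_ring_1) \<times> ('g \<Rightarrow> 'r)) \<times> 'a \<times> 'g)
         \<times> ((('g \<Rightarrow> 'r) \<times> ('g \<Rightarrow> 'r)) \<times> 'a \<times> 'g)) set" where
  "Trel G c = {(((m1,n1),g1,x1),((m2,n2),g2,x2)).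
      ((m1,n1),g1,x1) \<in> Tset G c \<and> ((m2,n2),g2,x2) \<in> Tset G c \<and> x1 = x2
    \<and> (\<exists>U. compact U \<and> open U \<and> U \<subseteq> unit_space G \<and> x1 \<in> U
          \<and> conv G (conv G m1 (indicator U)) n2 \<in> diag G)}"

text \<open>Group ring R(H) of a subgroup H of an isotropy group G_x^x (identity x):
  finitely supported functions H \<rightarrow> R with convolution.\<close>
definition grp_ring :: "'g set \<Rightarrow> ('g \<Rightarrow> 'r::comm_ring_1) set" where
  "grp_ring H = {f. finite (fsupp f) \<and> fsupp f \<subseteq> H}"

definition grp_conv :: "'g gpd \<Rightarrow> 'g set \<Rightarrow> ('g \<Rightarrow> 'r::comm_ring_1) \<Rightarrow> ('g \<Rightarrow> 'r) \<Rightarrow> 'g \<Rightarrow> 'r" where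
  "grp_conv G H f g h = (\<Sum>p \<in> {(a,b). a \<in> H \<and> b \<in> H \<and> mu G a b = h \<and> f a \<noteq> 0 \<and> g b \<noteq> 0}.
                           f (fst p) * g (snd p))"

definition grp_ring_good :: "'g gpd \<Rightarrow> 'g set \<Rightarrow> 'g \<Rightarrow> 'r::comm_ring_1 itself \<Rightarrow> bool" where
  "grp_ring_good G H x (_::'r itself) \<longleftrightarrow>
     (\<forall>f \<in> (grp_ring H :: ('g \<Rightarrow> 'r) set). \<forall>g \<in> grp_ring H.
        f \<noteq> (\<lambda>_. 0) \<longrightarrow> g \<noteq> (\<lambda>_. 0) \<longrightarrow> grp_conv G H f g \<noteq> (\<lambda>_. 0))
   \<and> (\<forall>f \<in> (grp_ring H :: ('g \<Rightarrow> 'r) set).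
        (\<exists>g \<in> grp_ring H. grp_conv G H f g = (\<lambda>k. if k = x then 1 else 0)
                          \<and> grp_conv G H g f = (\<lambda>k. if k = x then 1 else 0))
        \<longrightarrow> (\<exists>u h. h \<in> H \<and> f = (\<lambda>k. if k = h then u else 0)))"

definition classC :: "('g::t2_space) gpd \<Rightarrow> ('g \<Rightarrow> 'a::group_add) \<Rightarrow> 'r::comm_ring_1 itself \<Rightarrow> bool" where
  "classC G c R \<longleftrightarrow> ample_hausdorff G \<and> cont_cocycle G c
     \<and> (\<exists>X. X \<subseteq> unit_space G \<and> unit_space G \<subseteq> closure X
          \<and> (\<forall>x\<in>X. grp_ring_good G (c -` {0} \<inter> {\<eta>. sr G \<eta> = x \<and> rg G \<eta> = x}) x R))"

end

theory Submission
  imports Defs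
begin


locale gpd_loc =
  fixes G :: "'g gpd"
  assumes gpd: "groupoid G"
begin

lemma r_r[simp]: "rg G (rg G a) = rg G a" and s_r[simp]: "sr G (rg G a) = rg G a"
  and r_s[simp]: "rg G (sr G a) = sr G a" and s_s[simp]: "sr G (sr G a) = sr G a"
  using gpd unfolding groupoid_def by auto

lemma r_mu: "sr G a = rg G b \<Longrightarrow> rg G (mu G a b) = rg G a"
  and s_mu: "sr G a = rg G b \<Longrightarrow> sr G (mu G a b) = sr G b"
  using gpd unfolding groupoid_def by auto

lemma assoc: "sr G a = rg G b \<Longrightarrow> sr G b = rg G d \<Longrightarrow> mu G (mu G a b) d = mu G a (mu G b d)"
  using gpd unfolding groupoid_def by blast

lemma mu_r[simp]: "mu G (rg G a) a = a" and mu_s[simp]: "mu G a (sr G a) = a"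
  using gpd unfolding groupoid_def by auto

lemma s_iv[simp]: "sr G (iv G a) = rg G a" and r_iv[simp]: "rg G (iv G a) = sr G a"
  and mu_iv[simp]: "mu G a (iv G a) = rg G a" and iv_mu[simp]: "mu G (iv G a) a = sr G a"
  using gpd unfolding groupoid_def by auto

lemma unit_space_eq: "unit_space G = {u. rg G u = u}"
  unfolding unit_space_def by (auto, metis rangeI)

lemma unitI: "rg G u = u \<Longrightarrow> u \<in> unit_space G" by (simp add: unit_space_eq)
lemma unitD: "u \<in> unit_space G \<Longrightarrow> rg G u = u" by (simp add: unit_space_eq)
lemma unitD2: "u \<in> unit_space G \<Longrightarrow> sr G u = u" by (metis s_r unitD)
lemma r_unit[simp]: "rg G a \<in> unit_space G" and s_unit[simp]: "sr G a \<in> unit_space G"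
  by (simp_all add: unit_space_eq)

lemma cancel_left: "sr G a = rg G b \<Longrightarrow> sr G a = rg G b' \<Longrightarrow> mu G a b = mu G a b' \<Longrightarrow> b = b'"
  by (metis assoc iv_mu mu_r s_iv)

lemma cancel_right: "sr G b = rg G a \<Longrightarrow> sr G b' = rg G a \<Longrightarrow> mu G b a = mu G b' a \<Longrightarrow> b = b'"
  by (metis assoc mu_iv mu_s r_iv)

lemma iv_iv[simp]: "iv G (iv G a) = a"
proof -
  have "iv G (iv G a) = mu G (iv G (iv G a)) (sr G (iv G (iv G a)))" by (rule mu_s[symmetric])
  also have "sr G (iv G (iv G a)) = mu G (iv G a) a" by simp
  finally have "iv G (iv G a) = mu G (iv G (iv G a)) (mu G (iv G a) a)" .
  also have "\<dots> = mu G (mu G (iv G (iv G a)) (iv G a)) a"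
    by (rule assoc[symmetric]) simp_all
  also have "\<dots> = a" by simp
  finally show ?thesis .
qed

lemma iv_inj: "iv G a = iv G b \<Longrightarrow> a = b" by (metis iv_iv)

lemma mu_unit_eq_iv: "sr G a = rg G b \<Longrightarrow> mu G a b \<in> unit_space G \<Longrightarrow> b = iv G a"
  by (metis cancel_left mu_iv r_iv r_mu unitD)

lemma iv_mu_distrib: "sr G a = rg G b \<Longrightarrow> iv G (mu G a b) = mu G (iv G b) (iv G a)"
proof -
  assume h: "sr G a = rg G b"
  have "mu G (mu G a b) (mu G (iv G b) (iv G a)) = rg G (mu G a b)"
    using h by (metis assoc mu_iv mu_s r_iv s_iv s_mu r_mu)
  hence "mu G (iv G b) (iv G a) = iv G (mu G a b)"
    using h by (intro mu_unit_eq_iv) (auto simp: s_mu r_mu)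
  thus ?thesis by simp
qed

lemma iv_unit: "u \<in> unit_space G \<Longrightarrow> iv G u = u"
  by (metis iv_mu mu_s s_iv unitD unitD2 mu_r)

lemma mu_iv_left: "rg G a = rg G b \<Longrightarrow> mu G a (mu G (iv G a) b) = b"
  by (metis assoc mu_iv mu_r r_iv s_iv)

lemma mu_iv_left2: "sr G a = rg G b \<Longrightarrow> mu G (iv G a) (mu G a b) = b"
  by (metis assoc iv_mu mu_r s_iv)

lemma unit_mu_eq: "sr G a = rg G b \<Longrightarrow> mu G a b \<in> unit_space G \<Longrightarrow> a = iv G b"
  by (metis iv_iv iv_mu_distrib iv_unit mu_unit_eq_iv r_iv s_iv)

lemma assoc4:
  assumes "sr G b = rg G h1" "sr G h1 = rg G h2" "sr G h2 = rg G g"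
  shows "mu G (mu G b h1) (mu G h2 g) = mu G b (mu G (mu G h1 h2) g)"
proof -
  have "mu G (mu G b h1) (mu G h2 g) = mu G b (mu G h1 (mu G h2 g))"
    using assms by (intro assoc) (simp_all add: r_mu)
  also have "mu G h1 (mu G h2 g) = mu G (mu G h1 h2) g"
    using assms by (intro assoc[symmetric]) simp_all
  finally show ?thesis .
qed

end



locale ah = gpd_loc G for G :: "('g::t2_space) gpd" +
  assumes ample: "ample_hausdorff G"
begin

abbreviation "G0 \<equiv> unit_space G"

lemma lh_r: "local_homeo G (rg G)" and lh_s: "local_homeo G (sr G)"
  and cont_iv: "continuous_on UNIV (iv G)"
  and cont_mu: "continuous_on {p. sr G (fst p) = rg G (snd p)} (\<lambda>p. mu G (fst p) (snd p))"
  and ample_basis: "\<And>V x. openin (top_of_set G0) V \<Longrightarrow> x \<in> V \<Longrightarrow>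
        \<exists>K. compact K \<and> openin (top_of_set G0) K \<and> x \<in> K \<and> K \<subseteq> V"
  using ample unfolding ample_hausdorff_def by blast+

lemma open_vimage_cont: "continuous_on UNIV f \<Longrightarrow> open B \<Longrightarrow> open (f -` B)"
  using continuous_on_open_vimage[of UNIV f] by simp

lemma lh_cont: assumes "local_homeo G f" shows "continuous_on UNIV f"
proof -
  have "isCont f a" for a
  proof -
    obtain U where U: "open U" "a \<in> U" "homeomorphism U (f ` U) f (inv_into U f)"
      using assms unfolding local_homeo_def by blast
    hence "continuous_on U f" by (simp add: homeomorphism_def)
    thus ?thesis using U continuous_on_eq_continuous_at by blast
  qed
  thus ?thesis by (simp add: continuous_at_imp_continuous_on)
qed

lemma cont_r: "continuous_on UNIV (rg G)" and cont_s: "continuous_on UNIV (sr G)"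
  using lh_cont lh_r lh_s by auto

lemma lh_nbhd: assumes "local_homeo G f"
  obtains U where "open U" "a \<in> U" "inj_on f U" "openin (top_of_set G0) (f ` U)"
    "homeomorphism U (f ` U) f (inv_into U f)"
proof -
  obtain U where U: "open U" "a \<in> U" "openin (top_of_set G0) (f ` U)" "homeomorphism U (f ` U) f (inv_into U f)"
    using assms unfolding local_homeo_def by blast
  moreover have "inj_on f U"
  proof (rule inj_onI)
    fix x y assume "x \<in> U" "y \<in> U" "f x = f y"
    thus "x = y" using homeomorphism_apply1[OF U(4)] by metis
  qed
  ultimately show ?thesis using that by blast
qed

lemma lh_open_map: assumes "local_homeo G f" "open W"
  shows "openin (top_of_set G0) (f ` W)"
proof (subst openin_subopen, intro ballI)
  fix y assume "y \<in> f ` W"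
  then obtain a where a: "a \<in> W" "y = f a" by blast
  obtain U where U: "open U" "a \<in> U" "inj_on f U" "openin (top_of_set G0) (f ` U)"
    "homeomorphism U (f ` U) f (inv_into U f)" using lh_nbhd[OF assms(1)] by blast
  have "openin (top_of_set U) (W \<inter> U)" using assms(2) by (metis openin_open_Int Int_commute)
  hence "openin (top_of_set (f ` U)) (f ` (W \<inter> U))"
    using homeomorphism_imp_open_map[OF U(5)] by blast
  hence "openin (top_of_set G0) (f ` (W \<inter> U))" using U(4) openin_trans by blast
  thus "\<exists>T. openin (top_of_set G0) T \<and> y \<in> T \<and> T \<subseteq> f ` W" using a U(2) by blast
qed

lemma open_G0: "open G0"
proof (subst open_subopen, intro ballI)
  fix u assume u: "u \<in> G0"
  obtain U where U: "open U" "u \<in> U" "inj_on (rg G) U"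
    using lh_nbhd[OF lh_r] by blast
  define W where "W = U \<inter> rg G -` U"
  have "open W" unfolding W_def using U(1) cont_r by (simp add: open_Int open_vimage_cont)
  moreover have "u \<in> W" using u U unfolding W_def by (simp add: unitD)
  moreover have "W \<subseteq> G0"
  proof
    fix x assume "x \<in> W"
    hence "x \<in> U" "rg G x \<in> U" unfolding W_def by auto
    hence "rg G x = x" using U(3) by (metis inj_onD r_r)
    thus "x \<in> G0" by (rule unitI)
  qed
  ultimately show "\<exists>T. open T \<and> u \<in> T \<and> T \<subseteq> G0" by blast
qed

lemma openin_G0_open: "openin (top_of_set G0) V \<Longrightarrow> open V"
  using open_G0 openin_open_trans by blast

lemma r_open: "open W \<Longrightarrow> open (rg G ` W)" and s_open: "open W \<Longrightarrow> open (sr G ` W)"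
  using lh_open_map[OF lh_r] lh_open_map[OF lh_s] openin_G0_open by blast+

lemma iv_image: "iv G ` A = iv G -` A"
proof (rule set_eqI)
  fix x show "x \<in> iv G ` A \<longleftrightarrow> x \<in> iv G -` A"
  proof
    assume "x \<in> iv G ` A" then obtain a where "a \<in> A" "x = iv G a" by blast
    thus "x \<in> iv G -` A" by simp
  next
    assume "x \<in> iv G -` A" hence "iv G x \<in> A" by simp
    hence "iv G (iv G x) \<in> iv G ` A" by (rule imageI)
    thus "x \<in> iv G ` A" by simp
  qed
qed

lemma open_iv: "open A \<Longrightarrow> open (iv G ` A)"
  using cont_iv by (simp add: iv_image continuous_on_open_vimage)

lemma compact_iv: "compact A \<Longrightarrow> compact (iv G ` A)"
  using cont_iv compact_continuous_image continuous_on_subset by blast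

lemma fiber_finite_gen: assumes "local_homeo G f" "compact K"
  shows "finite {a\<in>K. f a = y}"
proof -
  have "\<forall>a. \<exists>U. open U \<and> a \<in> U \<and> inj_on f U"
  proof
    fix a obtain U where "open U" "a \<in> U" "inj_on f U" using lh_nbhd[OF assms(1), of a] by blast
    thus "\<exists>U. open U \<and> a \<in> U \<and> inj_on f U" by blast
  qed
  then obtain U where U: "\<And>a. open (U a)" "\<And>a. a \<in> U a" "\<And>a. inj_on f (U a)" by metis
  have cov: "K \<subseteq> (\<Union>c\<in>K. U c)" using U(2) by blast
  obtain C where C: "C \<subseteq> K" "finite C" "K \<subseteq> (\<Union>c\<in>C. U c)"
    by (rule compactE_image[OF assms(2) _ cov]) (simp add: U(1))
  have "{a\<in>K. f a = y} \<subseteq> (\<Union>c\<in>C. f -` {y} \<inter> U c)" using C by blast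
  moreover have "finite (f -` {y} \<inter> U c)" for c
    by (rule finite_vimage_IntI) (simp_all add: U(3))
  ultimately show ?thesis using C(2) by (meson finite_UN_I finite_subset)
qed

lemma fiber_finite_r: "compact K \<Longrightarrow> finite {a\<in>K. rg G a = y}"
  and fiber_finite_s: "compact K \<Longrightarrow> finite {a\<in>K. sr G a = y}"
  using fiber_finite_gen lh_r lh_s by auto

lemma basis:
  assumes "open W" "\<eta> \<in> W"
  shows "\<exists>A. compact A \<and> open A \<and> \<eta> \<in> A \<and> A \<subseteq> W \<and> inj_on (rg G) A \<and> inj_on (sr G) A"
proof -
  obtain U1 where U1: "open U1" "\<eta> \<in> U1" "inj_on (rg G) U1" using lh_nbhd[OF lh_r] by blast
  obtain U2 where U2: "open U2" "\<eta> \<in> U2" "inj_on (sr G) U2"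
    "homeomorphism U2 (sr G ` U2) (sr G) (inv_into U2 (sr G))" using lh_nbhd[OF lh_s] by blast
  define Ob where "Ob = U1 \<inter> U2 \<inter> W"
  have Ob: "open Ob" "\<eta> \<in> Ob" using U1 U2 assms unfolding Ob_def by auto
  obtain K where K: "compact K" "openin (top_of_set G0) K" "sr G \<eta> \<in> K" "K \<subseteq> sr G ` Ob"
    using ample_basis[OF lh_open_map[OF lh_s Ob(1)]] Ob(2) by blast
  define A where "A = Ob \<inter> sr G -` K"
  have "open K" using K(2) openin_G0_open by blast
  hence "open A" unfolding A_def using Ob(1) cont_s by (simp add: open_Int open_vimage_cont)
  moreover have "A = inv_into U2 (sr G) ` K"
  proof
    show "A \<subseteq> inv_into U2 (sr G) ` K"
    proof
      fix a assume "a \<in> A"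
      hence "a \<in> U2" "sr G a \<in> K" unfolding A_def Ob_def by auto
      hence "a = inv_into U2 (sr G) (sr G a)" using U2(3) by (simp add: inv_into_f_f)
      thus "a \<in> inv_into U2 (sr G) ` K" using \<open>sr G a \<in> K\<close> by (rule image_eqI)
    qed
    show "inv_into U2 (sr G) ` K \<subseteq> A"
    proof
      fix b assume "b \<in> inv_into U2 (sr G) ` K"
      then obtain k where k: "k \<in> K" "b = inv_into U2 (sr G) k" by blast
      then obtain a where a: "a \<in> Ob" "k = sr G a" using K(4) by blast
      have "a \<in> U2" using a unfolding Ob_def by auto
      hence "b = a" using k a U2(3) by (simp add: inv_into_f_f)
      thus "b \<in> A" using a k unfolding A_def by auto
    qed
  qed
  moreover have "compact (inv_into U2 (sr G) ` K)"
  proof (rule compact_continuous_image[OF _ K(1)])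
    have "K \<subseteq> sr G ` U2" using K(4) unfolding Ob_def by auto
    moreover have "continuous_on (sr G ` U2) (inv_into U2 (sr G))"
      using U2(4) unfolding homeomorphism_def by blast
    ultimately show "continuous_on K (inv_into U2 (sr G))"
      using continuous_on_subset by blast
  qed
  moreover have "\<eta> \<in> A" using Ob K unfolding A_def by auto
  moreover have "A \<subseteq> W" "inj_on (rg G) A" "inj_on (sr G) A"
    using U1(3) U2(3) unfolding A_def Ob_def by (auto intro: inj_on_subset)
  ultimately show ?thesis by (intro exI[of _ A]) simp
qed

lemma unit_cover:
  assumes "compact K" "K \<subseteq> G0"
  shows "\<exists>V. compact V \<and> open V \<and> V \<subseteq> G0 \<and> K \<subseteq> V"
proof -
  have "\<forall>x\<in>K. \<exists>V. compact V \<and> open V \<and> V \<subseteq> G0 \<and> x \<in> V"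
  proof
    fix x assume "x \<in> K" hence x: "x \<in> G0" using assms(2) by blast
    obtain V where "compact V" "openin (top_of_set G0) V" "x \<in> V" "V \<subseteq> G0"
      using ample_basis[OF openin_subtopology_self x] by blast
    thus "\<exists>V. compact V \<and> open V \<and> V \<subseteq> G0 \<and> x \<in> V" using openin_G0_open by blast
  qed
  then obtain V where V: "\<And>x. x \<in> K \<Longrightarrow> compact (V x) \<and> open (V x) \<and> V x \<subseteq> G0 \<and> x \<in> V x"
    by metis
  have cov: "K \<subseteq> (\<Union>c\<in>K. V c)" using V by blast
  obtain C where C: "C \<subseteq> K" "finite C" "K \<subseteq> (\<Union>c\<in>C. V c)"
    by (rule compactE_image[OF assms(1) _ cov]) (simp add: V)
  have "compact (\<Union>c\<in>C. V c)" using C V by (intro compact_UN) auto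
  moreover have "open (\<Union>c\<in>C. V c)" using C V by auto
  moreover have "(\<Union>c\<in>C. V c) \<subseteq> G0" using C V by auto
  ultimately show ?thesis using C(3) by blast
qed

lemma unit_nbhd_avoid:
  assumes "x \<in> G0" "finite F" "x \<notin> F"
  shows "\<exists>V. compact V \<and> open V \<and> V \<subseteq> G0 \<and> x \<in> V \<and> V \<inter> F = {}"
proof -
  have "open (- F)" using assms(2) finite_imp_closed by blast
  hence "openin (top_of_set G0) (G0 \<inter> - F)" by (rule openin_open_Int)
  hence "openin (top_of_set G0) (G0 - F)" by (simp add: Diff_eq)
  then obtain K where "compact K" "openin (top_of_set G0) K" "x \<in> K" "K \<subseteq> G0 - F"
    using ample_basis assms by blast
  thus ?thesis using openin_G0_open by blast
qed

lemma closed_comp: "closed {p. sr G (fst p) = rg G (snd p)}"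
proof (rule closed_Collect_eq)
  show "continuous_on UNIV (\<lambda>p::'g\<times>'g. sr G (fst p))"
    by (rule continuous_on_compose2[OF cont_s continuous_on_fst[OF continuous_on_id]]) simp
  show "continuous_on UNIV (\<lambda>p::'g\<times>'g. rg G (snd p))"
    by (rule continuous_on_compose2[OF cont_r continuous_on_snd[OF continuous_on_id]]) simp
qed

definition setmul :: "'g set \<Rightarrow> 'g set \<Rightarrow> 'g set" where
  "setmul A B = (\<lambda>p. mu G (fst p) (snd p)) ` ({p. sr G (fst p) = rg G (snd p)} \<inter> A \<times> B)"

lemma compact_setmul: assumes "compact A" "compact B" shows "compact (setmul A B)"
  unfolding setmul_def
proof (rule compact_continuous_image)
  show "compact ({p. sr G (fst p) = rg G (snd p)} \<inter> A \<times> B)"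
    using closed_Int_compact[OF closed_comp compact_Times[OF assms]] .
  show "continuous_on ({p. sr G (fst p) = rg G (snd p)} \<inter> A \<times> B) (\<lambda>p. mu G (fst p) (snd p))"
    by (rule continuous_on_subset[OF cont_mu]) blast
qed

lemma setmulI: "a \<in> A \<Longrightarrow> b \<in> B \<Longrightarrow> sr G a = rg G b \<Longrightarrow> mu G a b \<in> setmul A B"
  unfolding setmul_def by (rule image_eqI[of _ _ "(a,b)"]) auto

lemma density:
  assumes "X \<subseteq> G0" "G0 \<subseteq> closure X" "open Ob" "y \<in> Ob" "y \<in> G0"
  shows "\<exists>x\<in>X. x \<in> Ob"
proof -
  have "y \<in> closure X" using assms by auto
  hence "Ob \<inter> closure X \<noteq> {}" using assms(4) by blast
  hence "Ob \<inter> X \<noteq> {}" using open_Int_closure_eq_empty[OF assms(3)] by simp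
  thus ?thesis by blast
qed

lemma homeo_inv_into:
  fixes f :: "'g \<Rightarrow> 'g"
  assumes "compact A" "inj_on f A" "continuous_on A f"
  shows "homeomorphism A (f ` A) f (inv_into A f)"
proof -
  obtain g where g: "homeomorphism A (f ` A) f g" using homeomorphism_compact[OF assms(1,3) refl assms(2)] by blast
  show ?thesis
  proof (rule homeomorphism_cong[OF g refl refl refl])
    fix y assume "y \<in> f ` A"
    then obtain x where "x \<in> A" "y = f x" by blast
    thus "inv_into A f y = g y" using g assms(2) by (simp add: homeomorphism_apply1 inv_into_f_f)
  qed
qed

lemma cobisI:
  assumes "compact A" "open A" "inj_on (rg G) A" "inj_on (sr G) A"
  shows "cobis G A"
  unfolding cobis_def bisection_def
proof (intro conjI)
  show "homeomorphism A (rg G ` A) (rg G) (inv_into A (rg G))"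
    using homeo_inv_into[OF assms(1,3)] cont_r continuous_on_subset by blast
  show "homeomorphism A (sr G ` A) (sr G) (inv_into A (sr G))"
    using homeo_inv_into[OF assms(1,4)] cont_s continuous_on_subset by blast
  show "openin (top_of_set G0) (rg G ` A)" using lh_open_map[OF lh_r assms(2)] .
  show "openin (top_of_set G0) (sr G ` A)" using lh_open_map[OF lh_s assms(2)] .
qed (use assms in auto)

lemma hom_inj: "homeomorphism A B f g \<Longrightarrow> inj_on f A"
  by (rule inj_onI) (metis homeomorphism_apply1)

lemma cobisD:
  assumes "cobis G A"
  shows "compact A" "open A" "inj_on (rg G) A" "inj_on (sr G) A"
  using assms hom_inj unfolding cobis_def bisection_def by blast+

end


context ah begin

definition rinj :: "('g \<Rightarrow> 'r::zero) \<Rightarrow> bool" where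
  "rinj f \<longleftrightarrow> (\<forall>a\<in>fsupp f. \<forall>b\<in>fsupp f. rg G a = rg G b \<longrightarrow> a = b)"

lemma fsupp_iff[simp]: "a \<in> fsupp f \<longleftrightarrow> f a \<noteq> 0" by (simp add: fsupp_def)

lemma conv_at:
  fixes f g :: "'g \<Rightarrow> 'r::comm_ring_1"
  assumes ra: "rg G a = rg G \<eta>" and uq: "\<forall>a'\<in>fsupp f. rg G a' = rg G \<eta> \<longrightarrow> a' = a"
  shows "conv G f g \<eta> = f a * g (mu G (iv G a) \<eta>)"
proof -
  let ?S = "{(a,b). sr G a = rg G b \<and> mu G a b = \<eta> \<and> f a \<noteq> 0 \<and> g b \<noteq> 0}"
  let ?b = "mu G (iv G a) \<eta>"
  have sub: "?S \<subseteq> {(a, ?b)}"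
  proof
    fix p assume "p \<in> ?S"
    then obtain a' b where p: "p = (a',b)" "sr G a' = rg G b" "mu G a' b = \<eta>" "f a' \<noteq> 0" by auto
    have "rg G a' = rg G \<eta>" using r_mu[OF p(2)] p(3) by simp
    hence "a' = a" using uq p(4) by simp
    moreover have "b = ?b" using mu_iv_left2[OF p(2)] p(3) \<open>a' = a\<close> by simp
    ultimately show "p \<in> {(a, ?b)}" using p by simp
  qed
  have comp: "sr G a = rg G ?b" using ra by (simp add: r_mu)
  have eq: "mu G a ?b = \<eta>" using ra by (rule mu_iv_left)
  show ?thesis
  proof (cases "f a \<noteq> 0 \<and> g ?b \<noteq> 0")
    case True
    hence S: "?S = {(a, ?b)}" using sub comp eq by auto
    have "conv G f g \<eta> = (\<Sum>p\<in>?S. f (fst p) * g (snd p))" by (simp add: conv_def)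
    also have "\<dots> = f a * g ?b" by (simp only: S) simp
    finally show ?thesis .
  next
    case False
    hence S: "?S = {}" using sub by auto
    have "conv G f g \<eta> = (\<Sum>p\<in>?S. f (fst p) * g (snd p))" by (simp add: conv_def)
    also have "\<dots> = 0" by (simp only: S sum.empty)
    finally show ?thesis using False by auto
  qed
qed

lemma pick_exists:
  assumes "rinj f"
  shows "\<exists>a. rg G a = rg G \<eta> \<and> (\<forall>a'\<in>fsupp f. rg G a' = rg G \<eta> \<longrightarrow> a' = a)"
proof (cases "\<exists>a\<in>fsupp f. rg G a = rg G \<eta>")
  case True
  then obtain a where "a \<in> fsupp f" "rg G a = rg G \<eta>" by blast
  thus ?thesis using assms unfolding rinj_def by (intro exI[of _ a]) auto
next
  case False thus ?thesis by (intro exI[of _ "rg G \<eta>"]) auto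
qed

lemma conv_rinj:
  fixes f g :: "'g \<Rightarrow> 'r::comm_ring_1"
  assumes "rinj f" "a \<in> fsupp f" "rg G a = rg G \<eta>"
  shows "conv G f g \<eta> = f a * g (mu G (iv G a) \<eta>)"
  using assms by (intro conv_at) (auto simp: rinj_def)

lemma conv_none:
  fixes f g :: "'g \<Rightarrow> 'r::comm_ring_1"
  assumes "\<forall>a'\<in>fsupp f. rg G a' \<noteq> rg G \<eta>"
  shows "conv G f g \<eta> = 0"
proof -
  have "conv G f g \<eta> = f (rg G \<eta>) * g (mu G (iv G (rg G \<eta>)) \<eta>)"
    using assms by (intro conv_at) auto
  moreover have "f (rg G \<eta>) = 0" using assms[rule_format, of "rg G \<eta>"] by auto
  ultimately show ?thesis by simp
qed

lemma conv_unit_right: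
  fixes f d :: "'g \<Rightarrow> 'r::comm_ring_1"
  assumes d: "fsupp d \<subseteq> G0"
  shows "conv G f d \<eta> = f \<eta> * d (sr G \<eta>)"
proof -
  let ?S = "{(a,b). sr G a = rg G b \<and> mu G a b = \<eta> \<and> f a \<noteq> 0 \<and> d b \<noteq> 0}"
  have sub: "?S \<subseteq> {(\<eta>, sr G \<eta>)}"
  proof
    fix p assume "p \<in> ?S"
    then obtain a b where p: "p = (a,b)" "sr G a = rg G b" "mu G a b = \<eta>" "d b \<noteq> 0" by auto
    have "b \<in> G0" using d p(4) by auto
    hence "rg G b = b" by (rule unitD)
    hence "b = sr G a" using p(2) by simp
    hence "a = \<eta>" using p(3) by simp
    thus "p \<in> {(\<eta>, sr G \<eta>)}" using p \<open>b = sr G a\<close> by simp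
  qed
  show ?thesis
  proof (cases "f \<eta> \<noteq> 0 \<and> d (sr G \<eta>) \<noteq> 0")
    case True
    hence S: "?S = {(\<eta>, sr G \<eta>)}" using sub by auto
    have "conv G f d \<eta> = (\<Sum>p\<in>?S. f (fst p) * d (snd p))" by (simp add: conv_def)
    also have "\<dots> = f \<eta> * d (sr G \<eta>)" by (simp only: S) simp
    finally show ?thesis .
  next
    case False
    hence S: "?S = {}" using sub by auto
    have "conv G f d \<eta> = (\<Sum>p\<in>?S. f (fst p) * d (snd p))" by (simp add: conv_def)
    also have "\<dots> = 0" by (simp only: S sum.empty)
    finally show ?thesis using False by auto
  qed
qed

lemma conv_unit_left:
  fixes f d :: "'g \<Rightarrow> 'r::comm_ring_1"
  assumes d: "fsupp d \<subseteq> G0"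
  shows "conv G d f \<eta> = d (rg G \<eta>) * f \<eta>"
proof -
  have "conv G d f \<eta> = d (rg G \<eta>) * f (mu G (iv G (rg G \<eta>)) \<eta>)"
  proof (rule conv_at)
    show "\<forall>a'\<in>fsupp d. rg G a' = rg G \<eta> \<longrightarrow> a' = rg G \<eta>"
      using d unitD by fastforce
  qed simp
  thus ?thesis by (simp add: iv_unit)
qed

lemma supp_conv: "fsupp (conv G f g) \<subseteq> setmul (fsupp f) (fsupp g)"
proof
  fix \<eta> assume "\<eta> \<in> fsupp (conv G f g)"
  hence "(\<Sum>p\<in>{(a,b). sr G a = rg G b \<and> mu G a b = \<eta> \<and> f a \<noteq> 0 \<and> g b \<noteq> 0}. f (fst p) * g (snd p)) \<noteq> 0"
    unfolding conv_def by (simp add: fsupp_def)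
  then obtain p where "p \<in> {(a,b). sr G a = rg G b \<and> mu G a b = \<eta> \<and> f a \<noteq> 0 \<and> g b \<noteq> 0}"
    by (rule sum.not_neutral_contains_not_neutral)
  then obtain a b where "sr G a = rg G b" "mu G a b = \<eta>" "f a \<noteq> 0" "g b \<noteq> 0" by auto
  thus "\<eta> \<in> setmul (fsupp f) (fsupp g)" using setmulI by fastforce
qed

lemma setmulE:
  assumes "x \<in> setmul A B"
  obtains a b where "a \<in> A" "b \<in> B" "sr G a = rg G b" "x = mu G a b"
  using assms unfolding setmul_def by auto

lemma rinj_conv:
  assumes "rinj f" "rinj g"
  shows "rinj (conv G f g)"
  unfolding rinj_def
proof (intro ballI impI)
  fix x y assume x: "x \<in> fsupp (conv G f g)" and y: "y \<in> fsupp (conv G f g)" and r: "rg G x = rg G y"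
  obtain a b where ab: "a \<in> fsupp f" "b \<in> fsupp g" "sr G a = rg G b" "x = mu G a b"
    using supp_conv x by (blast elim: setmulE)
  obtain a' b' where ab': "a' \<in> fsupp f" "b' \<in> fsupp g" "sr G a' = rg G b'" "y = mu G a' b'"
    using supp_conv y by (blast elim: setmulE)
  have "rg G a = rg G a'" using r ab ab' by (simp add: r_mu)
  hence "a = a'" using assms(1) ab ab' unfolding rinj_def by blast
  hence "rg G b = rg G b'" using ab ab' by simp
  hence "b = b'" using assms(2) ab(2) ab'(2) unfolding rinj_def by blast
  thus "x = y" using ab ab' \<open>a = a'\<close> by simp
qed

lemma rinj_units: assumes "fsupp d \<subseteq> G0" shows "rinj d"
  unfolding rinj_def
proof (intro ballI impI)
  fix a b assume "a \<in> fsupp d" "b \<in> fsupp d" "rg G a = rg G b"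
  hence "a \<in> G0" "b \<in> G0" using assms by auto
  thus "a = b" using \<open>rg G a = rg G b\<close> unitD by simp
qed

lemma conv_assoc:
  fixes f g h :: "'g \<Rightarrow> 'r::comm_ring_1"
  assumes f: "rinj f" and g: "rinj g"
  shows "conv G (conv G f g) h = conv G f (conv G g h)"
proof
  fix \<eta>
  obtain a where a: "rg G a = rg G \<eta>" "\<forall>a'\<in>fsupp f. rg G a' = rg G \<eta> \<longrightarrow> a' = a"
    using pick_exists[OF f] by blast
  define \<eta>' where "\<eta>' = mu G (iv G a) \<eta>"
  have r\<eta>': "rg G \<eta>' = sr G a" unfolding \<eta>'_def using a(1) by (simp add: r_mu)
  obtain b where b: "rg G b = rg G \<eta>'" "\<forall>b'\<in>fsupp g. rg G b' = rg G \<eta>' \<longrightarrow> b' = b"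
    using pick_exists[OF g] by blast
  have comp: "sr G a = rg G b" using b(1) r\<eta>' by simp
  have rhs: "conv G f (conv G g h) \<eta> = f a * (g b * h (mu G (iv G b) \<eta>'))"
    using conv_at[OF a] conv_at[OF b] unfolding \<eta>'_def by simp
  have rab: "rg G (mu G a b) = rg G \<eta>" using comp a(1) by (simp add: r_mu)
  have fg_at: "conv G f g x = f a * g (mu G (iv G a) x)" if "rg G x = rg G \<eta>" for x
    using that a(2) by (intro conv_at) (auto simp: a(1))
  have uq: "\<forall>x\<in>fsupp (conv G f g). rg G x = rg G \<eta> \<longrightarrow> x = mu G a b"
  proof (intro ballI impI)
    fix x assume x: "x \<in> fsupp (conv G f g)" "rg G x = rg G \<eta>"
    hence ne: "f a * g (mu G (iv G a) x) \<noteq> 0" using fg_at by simp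
    have "rg G (mu G (iv G a) x) = rg G \<eta>'" using r\<eta>' x(2) a(1) by (simp add: r_mu)
    hence "mu G (iv G a) x = b" using b(2) ne by auto
    moreover have "mu G a (mu G (iv G a) x) = x" using x(2) a(1) by (intro mu_iv_left) simp
    ultimately show "x = mu G a b" by simp
  qed
  have "conv G (conv G f g) h \<eta> = conv G f g (mu G a b) * h (mu G (iv G (mu G a b)) \<eta>)"
    using conv_at[OF rab uq] .
  also have "conv G f g (mu G a b) = f a * g b"
    using fg_at[OF rab] comp by (simp add: mu_iv_left2)
  also have "mu G (iv G (mu G a b)) \<eta> = mu G (iv G b) \<eta>'"
    unfolding \<eta>'_def using comp a(1) by (simp add: iv_mu_distrib assoc)
  finally show "conv G (conv G f g) h \<eta> = conv G f (conv G g h) \<eta>"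
    using rhs by (simp add: mult.assoc)
qed

lemma conv_units_supp:
  fixes d e :: "'g \<Rightarrow> 'r::comm_ring_1"
  assumes "fsupp d \<subseteq> G0"
  shows "fsupp (conv G e d) \<subseteq> fsupp e" "fsupp (conv G d e) \<subseteq> fsupp e"
  using conv_unit_right[OF assms] conv_unit_left[OF assms] by (auto simp del: fsupp_iff simp: fsupp_def)

lemma conv_units_comm:
  fixes d e :: "'g \<Rightarrow> 'r::comm_ring_1"
  assumes d: "fsupp d \<subseteq> G0" and e: "fsupp e \<subseteq> G0"
  shows "conv G d e = conv G e d"
proof
  fix \<eta>
  show "conv G d e \<eta> = conv G e d \<eta>"
  proof (cases "\<eta> \<in> G0")
    case True thus ?thesis using conv_unit_right[OF d] conv_unit_right[OF e] unitD2 by (simp add: mult.commute)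
  next
    case False
    hence "d \<eta> = 0" "e \<eta> = 0" using d e by auto
    thus ?thesis using conv_unit_right[OF d] conv_unit_right[OF e] by simp
  qed
qed

end


context ah begin

definition lc :: "('g \<Rightarrow> 'r) \<Rightarrow> bool" where
  "lc f \<longleftrightarrow> (\<forall>a. \<exists>U. open U \<and> a \<in> U \<and> (\<forall>b\<in>U. f b = f a))"

lemma steinberg_iff: "f \<in> steinberg G \<longleftrightarrow> lc f \<and> compact (fsupp f)"
  unfolding steinberg_def lc_def by simp

lemma lc_open: assumes "lc f" shows "open (fsupp f)"
proof (subst open_subopen, intro ballI)
  fix a assume a: "a \<in> fsupp f"
  obtain U where "open U" "a \<in> U" "\<forall>b\<in>U. f b = f a" using assms unfolding lc_def by blast
  moreover have "U \<subseteq> fsupp f"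
  proof
    fix b assume "b \<in> U"
    hence "f b = f a" using \<open>\<forall>b\<in>U. f b = f a\<close> by blast
    thus "b \<in> fsupp f" using a by simp
  qed
  ultimately show "\<exists>T. open T \<and> a \<in> T \<and> T \<subseteq> fsupp f" by blast
qed

lemma lc_closed: assumes "lc f" shows "closed (fsupp f)"
  unfolding closed_def
proof (subst open_subopen, intro ballI)
  fix a assume a: "a \<in> - fsupp f"
  obtain U where "open U" "a \<in> U" "\<forall>b\<in>U. f b = f a" using assms unfolding lc_def by blast
  moreover have "U \<subseteq> - fsupp f"
  proof
    fix b assume "b \<in> U"
    hence "f b = f a" using \<open>\<forall>b\<in>U. f b = f a\<close> by blast
    thus "b \<in> - fsupp f" using a by simp
  qed
  ultimately show "\<exists>T. open T \<and> a \<in> T \<and> T \<subseteq> - fsupp f" by blast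
qed

lemma st_lc: "f \<in> steinberg G \<Longrightarrow> lc f"
  and st_compact: "f \<in> steinberg G \<Longrightarrow> compact (fsupp f)"
  and st_open: "f \<in> steinberg G \<Longrightarrow> open (fsupp f)"
  and st_closed: "f \<in> steinberg G \<Longrightarrow> closed (fsupp f)"
  by (simp_all add: steinberg_iff lc_open lc_closed)

lemma fsupp_indicator: "fsupp (indicator A :: 'g \<Rightarrow> 'r::comm_ring_1) = A"
  by (auto simp: fsupp_def indicator_def)

lemma indicator_steinberg:
  assumes "compact A" "open A"
  shows "(indicator A :: 'g \<Rightarrow> 'r::comm_ring_1) \<in> steinberg G"
  unfolding steinberg_iff
proof
  have "closed A" using assms(1) by (rule compact_imp_closed)
  show "lc (indicator A :: 'g \<Rightarrow> 'r)" unfolding lc_def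
  proof
    fix a show "\<exists>U. open U \<and> a \<in> U \<and> (\<forall>b\<in>U. (indicator A :: 'g \<Rightarrow> 'r) b = indicator A a)"
    proof (cases "a \<in> A")
      case True thus ?thesis using assms(2) by (intro exI[of _ A]) auto
    next
      case False thus ?thesis using \<open>closed A\<close> by (intro exI[of _ "- A"]) (auto simp: closed_def)
    qed
  qed
  show "compact (fsupp (indicator A :: 'g \<Rightarrow> 'r))" using assms(1) by (simp add: fsupp_indicator)
qed

lemma steinberg_conv:
  fixes f g :: "'g \<Rightarrow> 'r::comm_ring_1"
  assumes f: "f \<in> steinberg G" and g: "g \<in> steinberg G" and fr: "rinj f"
  shows "conv G f g \<in> steinberg G"
proof -
  define B where "B = fsupp f"
  have B: "compact B" "open B" using f st_compact st_open unfolding B_def by auto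
  have injB: "inj_on (rg G) B" using fr unfolding rinj_def B_def by (auto intro: inj_onI)
  define h where "h = inv_into B (rg G)"
  have hom: "homeomorphism B (rg G ` B) (rg G) h"
    unfolding h_def using homeo_inv_into[OF B(1) injB continuous_on_subset[OF cont_r subset_UNIV]] .
  have hcont: "continuous_on (rg G ` B) h" using hom unfolding homeomorphism_def by blast
  have rBo: "open (rg G ` B)" using r_open[OF B(2)] .
  have rBc: "closed (rg G ` B)"
    using compact_imp_closed[OF compact_continuous_image[OF continuous_on_subset[OF cont_r subset_UNIV] B(1)]] .
  define Om where "Om = rg G -` (rg G ` B)"
  have Omo: "open Om" unfolding Om_def using open_vimage_cont[OF cont_r rBo] .
  have "open (rg G -` (- (rg G ` B)))" using open_vimage_cont[OF cont_r] rBc by (simp add: open_Compl)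
  hence Omco: "open (- Om)" by (simp add: Om_def vimage_Compl)
  define a where "a = (\<lambda>\<eta>. h (rg G \<eta>))"
  have aB: "a \<eta> \<in> B" "rg G (a \<eta>) = rg G \<eta>" if "\<eta> \<in> Om" for \<eta>
    using that unfolding a_def Om_def h_def by (auto intro: inv_into_into f_inv_into_f)
  have val: "conv G f g \<eta> = f (a \<eta>) * g (mu G (iv G (a \<eta>)) \<eta>)" if "\<eta> \<in> Om" for \<eta>
    using conv_rinj[OF fr aB(1)[OF that, unfolded B_def] aB(2)[OF that]] .
  have val0: "conv G f g \<eta> = 0" if "\<eta> \<notin> Om" for \<eta>
  proof (rule conv_none, intro ballI)
    fix a' assume "a' \<in> fsupp f"
    show "rg G a' \<noteq> rg G \<eta>"
    proof
      assume h: "rg G a' = rg G \<eta>"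
      have "rg G \<eta> \<in> rg G ` B" unfolding B_def using \<open>a' \<in> fsupp f\<close> h[symmetric] by (rule rev_image_eqI[where f="rg G"])
      thus False using that unfolding Om_def by simp
    qed
  qed
  have acont: "continuous_on Om a" unfolding a_def
    by (rule continuous_on_compose2[OF hcont continuous_on_subset[OF cont_r]]) (auto simp: Om_def)
  have ivcont: "continuous_on Om (\<lambda>\<eta>. iv G (a \<eta>))"
    by (rule continuous_on_compose2[OF cont_iv acont]) simp
  have bcont: "continuous_on Om (\<lambda>\<eta>. mu G (iv G (a \<eta>)) \<eta>)"
  proof -
    have "continuous_on Om (\<lambda>\<eta>. (iv G (a \<eta>), \<eta>))"
      by (rule continuous_on_Pair[OF ivcont continuous_on_id])
    moreover have "(\<lambda>\<eta>. (iv G (a \<eta>), \<eta>)) ` Om \<subseteq> {p. sr G (fst p) = rg G (snd p)}"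
      using aB by auto
    ultimately have "continuous_on Om (\<lambda>x. (\<lambda>p. mu G (fst p) (snd p)) ((\<lambda>\<eta>. (iv G (a \<eta>), \<eta>)) x))"
      by (rule continuous_on_compose2[OF cont_mu])
    thus ?thesis by simp
  qed
  have lcf: "lc f" and lcg: "lc g" using f g st_lc by auto
  have "lc (conv G f g)" unfolding lc_def
  proof
    fix \<eta>
    show "\<exists>U. open U \<and> \<eta> \<in> U \<and> (\<forall>b\<in>U. conv G f g b = conv G f g \<eta>)"
    proof (cases "\<eta> \<in> Om")
      case False thus ?thesis using Omco val0 by (intro exI[of _ "- Om"]) auto
    next
      case True
      obtain V1 where V1: "open V1" "a \<eta> \<in> V1" "\<forall>b\<in>V1. f b = f (a \<eta>)" using lcf unfolding lc_def by blast
      obtain V2 where V2: "open V2" "mu G (iv G (a \<eta>)) \<eta> \<in> V2"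
        "\<forall>b\<in>V2. g b = g (mu G (iv G (a \<eta>)) \<eta>)" using lcg unfolding lc_def by blast
      define U where "U = (a -` V1 \<inter> Om) \<inter> ((\<lambda>\<eta>. mu G (iv G (a \<eta>)) \<eta>) -` V2 \<inter> Om)"
      have "open (a -` V1 \<inter> Om)" using continuous_on_open_vimage[OF Omo, of a] acont V1(1) by simp
      moreover have "open ((\<lambda>\<eta>. mu G (iv G (a \<eta>)) \<eta>) -` V2 \<inter> Om)"
        using continuous_on_open_vimage[OF Omo, of "\<lambda>\<eta>. mu G (iv G (a \<eta>)) \<eta>"] bcont V2(1) by simp
      ultimately have "open U" unfolding U_def by auto
      moreover have "\<eta> \<in> U" using True V1 V2 unfolding U_def by auto
      moreover have "\<forall>b\<in>U. conv G f g b = conv G f g \<eta>"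
      proof
        fix b assume "b \<in> U"
        hence "b \<in> Om" "a b \<in> V1" "mu G (iv G (a b)) b \<in> V2" unfolding U_def by auto
        hence "f (a b) = f (a \<eta>)" "g (mu G (iv G (a b)) b) = g (mu G (iv G (a \<eta>)) \<eta>)"
          using V1(3) V2(3) by blast+
        thus "conv G f g b = conv G f g \<eta>" using val[OF True] val[OF \<open>b \<in> Om\<close>] by simp
      qed
      ultimately show ?thesis by blast
    qed
  qed
  moreover have "compact (fsupp (conv G f g))"
  proof -
    have "compact (setmul (fsupp f) (fsupp g))" using compact_setmul[OF st_compact[OF f] st_compact[OF g]] .
    moreover have "closed (fsupp (conv G f g))" using lc_closed[OF \<open>lc (conv G f g)\<close>] .
    ultimately have "compact (setmul (fsupp f) (fsupp g) \<inter> fsupp (conv G f g))" by (rule compact_Int_closed)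
    moreover have "setmul (fsupp f) (fsupp g) \<inter> fsupp (conv G f g) = fsupp (conv G f g)" using supp_conv by blast
    ultimately show ?thesis by simp
  qed
  ultimately show ?thesis unfolding steinberg_iff by blast
qed

end


locale ahc = ah G for G :: "('g::t2_space) gpd" +
  fixes c :: "'g \<Rightarrow> 'a::group_add"
  assumes cocyc: "cont_cocycle G c"
begin

lemma c_mu: "sr G a = rg G b \<Longrightarrow> c (mu G a b) = c a + c b"
  using cocyc unfolding cont_cocycle_def by blast

lemma c_open: "open (c -` {g})"
  using cocyc unfolding cont_cocycle_def by blast

lemma c_unit: assumes "u \<in> G0" shows "c u = 0"
proof -
  have "rg G u = u" "sr G u = u" using assms unitD unitD2 by auto
  hence "mu G u u = u" using mu_r[of u] by simp
  hence "c u = c u + c u" using c_mu[of u u] \<open>rg G u = u\<close> \<open>sr G u = u\<close> by simp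
  hence "c u + 0 = c u + c u" by simp
  hence "0 = c u" by (rule add_left_imp_eq)
  thus ?thesis by simp
qed

lemma c_iv: "c (iv G a) = - c a"
proof -
  have "c (mu G a (iv G a)) = c a + c (iv G a)" by (rule c_mu) simp
  hence "c a + c (iv G a) = 0" using c_unit[of "rg G a"] by simp
  thus ?thesis by (simp add: add_eq_0_iff)
qed

definition Hz :: "'g \<Rightarrow> 'g set" where
  "Hz z = c -` {0} \<inter> {\<eta>. sr G \<eta> = z \<and> rg G \<eta> = z}"

lemma Hz_iff: "h \<in> Hz z \<longleftrightarrow> c h = 0 \<and> sr G h = z \<and> rg G h = z"
  unfolding Hz_def by auto

lemma Hz_unit: "z \<in> G0 \<Longrightarrow> z \<in> Hz z"
  using c_unit unitD unitD2 Hz_iff by blast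

lemma Hz_mu: "h1 \<in> Hz z \<Longrightarrow> h2 \<in> Hz z \<Longrightarrow> mu G h1 h2 \<in> Hz z"
  unfolding Hz_iff by (simp add: c_mu r_mu s_mu)

lemma Hz_unit_iff: "h \<in> Hz z \<Longrightarrow> h \<in> G0 \<longleftrightarrow> h = z"
  unfolding Hz_iff using unitD unitI by (metis r_r)

lemma Hz_swap: assumes "h1 \<in> Hz z" "h2 \<in> Hz z" "mu G h1 h2 = z" "z \<in> G0"
  shows "mu G h2 h1 = z"
proof -
  have "sr G h1 = rg G h2" using assms(1,2) Hz_iff by simp
  hence "h2 = iv G h1" using assms mu_unit_eq_iv by simp
  thus ?thesis using assms(1) Hz_iff by simp
qed

lemma grp_conv_outside:
  assumes "k \<notin> Hz z"
  shows "grp_conv G (Hz z) f g k = 0"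
proof -
  have "{(a,b). a \<in> Hz z \<and> b \<in> Hz z \<and> mu G a b = k \<and> f a \<noteq> 0 \<and> g b \<noteq> 0} = {}"
    using assms Hz_mu by blast
  thus ?thesis unfolding grp_conv_def by (simp only:) simp
qed

lemma diag_supp: "d \<in> diag G \<Longrightarrow> fsupp d \<subseteq> G0"
  unfolding diag_def by simp

lemma diag_zero: "d \<in> diag G \<Longrightarrow> x \<notin> G0 \<Longrightarrow> d x = 0"
  using diag_supp by fastforce

lemma indicator_diag:
  assumes "compact V" "open V" "V \<subseteq> G0"
  shows "(indicator V :: 'g \<Rightarrow> 'r::comm_ring_1) \<in> diag G"
  unfolding diag_def using indicator_steinberg[OF assms(1,2)] assms(3) by (simp add: fsupp_indicator)

lemma sandwich:
  fixes m n :: "'g \<Rightarrow> 'r::idom"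
  assumes nm: "normaliser G m n" and mh: "fsupp m \<subseteq> c -` {g}" and nh: "fsupp n \<subseteq> c -` {-g}"
    and z: "z \<in> G0" and b: "sr G b = z" "c b = - g" and gam: "m \<gamma> \<noteq> 0" "rg G \<gamma> = z"
    and k: "k \<in> Hz z" and nu: "mu G b (mu G k \<gamma>) \<notin> G0"
  shows "grp_conv G (Hz z) (\<lambda>h. if h \<in> Hz z then n (mu G b h) else 0)
            (\<lambda>h. if h \<in> Hz z then m (mu G h \<gamma>) else 0) k = 0"
proof -
  define Nb where "Nb = (\<lambda>h. if h \<in> Hz z then n (mu G b h) else 0)"
  define M where "M = (\<lambda>h. if h \<in> Hz z then m (mu G h \<gamma>) else 0)"
  define \<eta> where "\<eta> = mu G b (mu G k \<gamma>)"
  have mst: "m \<in> steinberg G" "n \<in> steinberg G" using nm unfolding normaliser_def by auto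
  define F where "F = rg G ` {c' \<in> fsupp m. sr G c' = sr G \<gamma>}"
  have "finite F" unfolding F_def using fiber_finite_s[OF st_compact[OF mst(1)]] by simp
  then obtain V where V: "compact V" "open V" "V \<subseteq> G0" "z \<in> V" "V \<inter> (F - {z}) = {}"
    using unit_nbhd_avoid[OF z, of "F - {z}"] by auto
  define d :: "'g \<Rightarrow> 'r" where "d = indicator V"
  have dD: "d \<in> diag G" unfolding d_def using indicator_diag V by blast
  have dsupp: "fsupp d \<subseteq> G0" using diag_supp[OF dD] .
  define E where "E = conv G (conv G n d) m"
  have "E \<in> diag G" using nm dD unfolding normaliser_def E_def by blast
  hence E0: "E \<eta> = 0" using nu \<eta>_def diag_zero by blast
  have nd: "conv G n d a = n a * d (sr G a)" for a using conv_unit_right[OF dsupp] .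
  have cg: "c x = g" if "m x \<noteq> 0" for x using mh that by auto
  have cn: "c x = - g" if "n x \<noteq> 0" for x using nh that by auto
  have kz: "sr G k = z" "rg G k = z" "c k = 0" using k Hz_iff by auto
  define S1 where "S1 = {(a,c'). sr G a = rg G c' \<and> mu G a c' = \<eta> \<and> conv G n d a \<noteq> 0 \<and> m c' \<noteq> 0}"
  define S2 where "S2 = {(h1,h2). h1 \<in> Hz z \<and> h2 \<in> Hz z \<and> mu G h1 h2 = k \<and> Nb h1 \<noteq> 0 \<and> M h2 \<noteq> 0}"
  define \<phi> where "\<phi> = (\<lambda>p. (mu G b (fst p), mu G (snd p) \<gamma>))"
  have r\<eta>: "rg G \<eta> = rg G b" unfolding \<eta>_def using b kz gam by (simp add: r_mu)
  have s\<eta>: "sr G \<eta> = sr G \<gamma>" unfolding \<eta>_def using b kz gam by (simp add: s_mu r_mu)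
  have img1: "\<phi> p \<in> S1" if p: "p \<in> S2" for p
  proof -
    obtain h1 h2 where h: "p = (h1,h2)" "h1 \<in> Hz z" "h2 \<in> Hz z" "mu G h1 h2 = k" "Nb h1 \<noteq> 0" "M h2 \<noteq> 0"
      using p unfolding S2_def by auto
    have hz: "sr G h1 = z" "rg G h1 = z" "sr G h2 = z" "rg G h2 = z" using h Hz_iff by auto
    have "sr G (mu G b h1) = rg G (mu G h2 \<gamma>)" using hz b gam by (simp add: s_mu r_mu)
    moreover have "mu G (mu G b h1) (mu G h2 \<gamma>) = \<eta>"
      unfolding \<eta>_def using assoc4[of b h1 h2 \<gamma>] hz b gam h(4) by simp
    moreover have "conv G n d (mu G b h1) \<noteq> 0"
      using nd h(2,5) hz b V(4) unfolding Nb_def d_def by (simp add: s_mu)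
    moreover have "m (mu G h2 \<gamma>) \<noteq> 0" using h(3,6) unfolding M_def by simp
    ultimately show ?thesis unfolding S1_def \<phi>_def using h(1) by simp
  qed
  have img2: "q \<in> \<phi> ` S2" if q: "q \<in> S1" for q
  proof -
    obtain a c' where ac: "q = (a,c')" "sr G a = rg G c'" "mu G a c' = \<eta>" "conv G n d a \<noteq> 0" "m c' \<noteq> 0"
      using q unfolding S1_def by auto
    have na: "n a \<noteq> 0" "d (sr G a) \<noteq> 0" using ac(4) nd by auto
    hence saV: "sr G a \<in> V" unfolding d_def by (simp add: indicator_def split: if_splits)
    have ra: "rg G a = rg G b" using r_mu[OF ac(2)] ac(3) r\<eta> by simp
    have sc: "sr G c' = sr G \<gamma>" using s_mu[OF ac(2)] ac(3) s\<eta> by simp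
    have "rg G c' \<in> F" unfolding F_def using ac(5) sc by auto
    hence rc: "rg G c' = z" using V(5) saV ac(2) by auto
    define h1 where "h1 = mu G (iv G b) a"
    define h2 where "h2 = mu G c' (iv G \<gamma>)"
    have h1z: "h1 \<in> Hz z" unfolding Hz_iff h1_def
      using ra b ac(2) rc c_iv cn[OF na(1)] by (simp add: c_mu r_mu s_mu)
    have h2z: "h2 \<in> Hz z" unfolding Hz_iff h2_def
      using sc gam rc c_iv cg[OF ac(5)] cg[OF gam(1)] by (simp add: c_mu r_mu s_mu)
    have bh1: "mu G b h1 = a" unfolding h1_def using ra by (intro mu_iv_left) simp
    have "mu G h2 \<gamma> = mu G c' (mu G (iv G \<gamma>) \<gamma>)" unfolding h2_def
      by (rule assoc) (simp_all add: sc)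
    also have "\<dots> = mu G c' (sr G c')" by (simp add: sc)
    finally have h2g: "mu G h2 \<gamma> = c'" by simp
    have hz: "sr G h1 = z" "rg G h1 = z" "sr G h2 = z" "rg G h2 = z" using h1z h2z Hz_iff by auto
    have "mu G b (mu G (mu G h1 h2) \<gamma>) = mu G (mu G b h1) (mu G h2 \<gamma>)"
      by (rule assoc4[symmetric]) (simp_all add: hz b(1) gam(2))
    also have "\<dots> = mu G a c'" by (simp only: bh1 h2g)
    also have "\<dots> = mu G b (mu G k \<gamma>)" using ac(3) unfolding \<eta>_def .
    finally have X: "mu G b (mu G (mu G h1 h2) \<gamma>) = mu G b (mu G k \<gamma>)" .
    have h12: "sr G (mu G h1 h2) = z" "rg G (mu G h1 h2) = z" using hz by (simp_all add: s_mu r_mu)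
    have "mu G (mu G h1 h2) \<gamma> = mu G k \<gamma>"
      by (rule cancel_left[OF _ _ X]) (simp_all add: r_mu h12 b(1) gam(2) kz)
    hence hk: "mu G h1 h2 = k"
      by (rule cancel_right[rotated 2]) (simp_all add: h12 kz gam(2))
    have "Nb h1 \<noteq> 0" unfolding Nb_def using h1z bh1 na by simp
    moreover have "M h2 \<noteq> 0" unfolding M_def using h2z h2g ac(5) by simp
    ultimately have "(h1,h2) \<in> S2" unfolding S2_def using h1z h2z hk by simp
    moreover have "\<phi> (h1,h2) = q" unfolding \<phi>_def using bh1 h2g ac(1) by simp
    ultimately show ?thesis by force
  qed
  have inj: "inj_on \<phi> S2"
  proof (rule inj_onI)
    fix p p' assume p: "p \<in> S2" and p': "p' \<in> S2" and e: "\<phi> p = \<phi> p'"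
    obtain h1 h2 where h: "p = (h1,h2)" "h1 \<in> Hz z" "h2 \<in> Hz z" using p unfolding S2_def by auto
    obtain h1' h2' where h': "p' = (h1',h2')" "h1' \<in> Hz z" "h2' \<in> Hz z" using p' unfolding S2_def by auto
    have e1: "mu G b h1 = mu G b h1'" and e2: "mu G h2 \<gamma> = mu G h2' \<gamma>" using e h h' unfolding \<phi>_def by auto
    have "h1 = h1'" using cancel_left[OF _ _ e1] b h h' Hz_iff by simp
    moreover have "h2 = h2'" using cancel_right[OF _ _ e2] gam h h' Hz_iff by simp
    ultimately show "p = p'" using h h' by simp
  qed
  have bij: "bij_betw \<phi> S2 S1"
    unfolding bij_betw_def using inj img1 img2 by blast
  have "E \<eta> = (\<Sum>p\<in>S1. conv G n d (fst p) * m (snd p))" unfolding E_def conv_def S1_def by simp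
  also have "\<dots> = (\<Sum>p\<in>S2. conv G n d (fst (\<phi> p)) * m (snd (\<phi> p)))"
    by (rule sum.reindex_bij_betw[OF bij, symmetric])
  also have "\<dots> = (\<Sum>p\<in>S2. Nb (fst p) * M (snd p))"
  proof (rule sum.cong[OF refl])
    fix p assume "p \<in> S2"
    then obtain h1 h2 where h: "p = (h1,h2)" "h1 \<in> Hz z" "h2 \<in> Hz z" unfolding S2_def by auto
    have "sr G (mu G b h1) = z" using h b Hz_iff by (simp add: s_mu)
    thus "conv G n d (fst (\<phi> p)) * m (snd (\<phi> p)) = Nb (fst p) * M (snd p)"
      using h nd V(4) unfolding \<phi>_def Nb_def M_def d_def by simp
  qed
  also have "\<dots> = grp_conv G (Hz z) Nb M k" unfolding grp_conv_def S2_def by simp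
  finally show ?thesis using E0 unfolding Nb_def M_def by simp
qed

end


context ahc begin

definition Mf :: "('g \<Rightarrow> 'r::zero) \<Rightarrow> 'g \<Rightarrow> 'g \<Rightarrow> 'g \<Rightarrow> 'r" where
  "Mf m \<gamma> z = (\<lambda>h. if h \<in> Hz z then m (mu G h \<gamma>) else 0)"
definition Nf :: "('g \<Rightarrow> 'r::zero) \<Rightarrow> 'g \<Rightarrow> 'g \<Rightarrow> 'g \<Rightarrow> 'r" where
  "Nf n b z = (\<lambda>h. if h \<in> Hz z then n (mu G b h) else 0)"

lemma normaliser_sym: "normaliser G m n \<longleftrightarrow> normaliser G n m"
  unfolding normaliser_def by blast

lemma Mf_ring:
  assumes "compact (fsupp m)" "rg G \<gamma> = z"
  shows "Mf m \<gamma> z \<in> grp_ring (Hz z)"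
proof -
  have "fsupp (Mf m \<gamma> z) \<subseteq> (\<lambda>x. mu G x (iv G \<gamma>)) ` {x \<in> fsupp m. sr G x = sr G \<gamma>}"
  proof
    fix h assume "h \<in> fsupp (Mf m \<gamma> z)"
    hence h: "h \<in> Hz z" "m (mu G h \<gamma>) \<noteq> 0" unfolding Mf_def by (auto split: if_splits)
    have hz: "sr G h = z" "rg G h = z" using h(1) Hz_iff by auto
    have "mu G (mu G h \<gamma>) (iv G \<gamma>) = mu G h (mu G \<gamma> (iv G \<gamma>))"
      by (rule assoc) (simp_all add: hz assms(2))
    also have "\<dots> = mu G h (sr G h)" using hz assms(2) by simp
    also have "\<dots> = h" by simp
    finally have "h = mu G (mu G h \<gamma>) (iv G \<gamma>)" by simp
    moreover have "sr G (mu G h \<gamma>) = sr G \<gamma>" using hz assms(2) by (simp add: s_mu)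
    ultimately show "h \<in> (\<lambda>x. mu G x (iv G \<gamma>)) ` {x \<in> fsupp m. sr G x = sr G \<gamma>}"
      using h(2) by auto
  qed
  moreover have "finite ((\<lambda>x. mu G x (iv G \<gamma>)) ` {x \<in> fsupp m. sr G x = sr G \<gamma>})"
    using fiber_finite_s[OF assms(1)] by simp
  moreover have "fsupp (Mf m \<gamma> z) \<subseteq> Hz z" unfolding Mf_def by (auto simp: fsupp_def)
  ultimately show ?thesis unfolding grp_ring_def using finite_subset by blast
qed

lemma Nf_ring:
  assumes "compact (fsupp n)" "sr G b = z"
  shows "Nf n b z \<in> grp_ring (Hz z)"
proof -
  have "fsupp (Nf n b z) \<subseteq> (\<lambda>x. mu G (iv G b) x) ` {x \<in> fsupp n. rg G x = rg G b}"
  proof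
    fix h assume "h \<in> fsupp (Nf n b z)"
    hence h: "h \<in> Hz z" "n (mu G b h) \<noteq> 0" unfolding Nf_def by (auto split: if_splits)
    have hz: "sr G h = z" "rg G h = z" using h(1) Hz_iff by auto
    have "h = mu G (iv G b) (mu G b h)" using hz assms(2) by (simp add: mu_iv_left2)
    moreover have "rg G (mu G b h) = rg G b" using hz assms(2) by (simp add: r_mu)
    ultimately show "h \<in> (\<lambda>x. mu G (iv G b) x) ` {x \<in> fsupp n. rg G x = rg G b}"
      using h(2) by auto
  qed
  moreover have "finite ((\<lambda>x. mu G (iv G b) x) ` {x \<in> fsupp n. rg G x = rg G b})"
    using fiber_finite_r[OF assms(1)] by simp
  moreover have "fsupp (Nf n b z) \<subseteq> Hz z" unfolding Nf_def by (auto simp: fsupp_def)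
  ultimately show ?thesis unfolding grp_ring_def using finite_subset by blast
qed

lemma grp_conv_swap:
  fixes f g :: "'g \<Rightarrow> 'r::comm_ring_1"
  assumes z: "z \<in> G0"
  shows "grp_conv G (Hz z) f g z = grp_conv G (Hz z) g f z"
proof -
  let ?A = "{(a,b). a \<in> Hz z \<and> b \<in> Hz z \<and> mu G a b = z \<and> f a \<noteq> 0 \<and> g b \<noteq> 0}"
  let ?B = "{(a,b). a \<in> Hz z \<and> b \<in> Hz z \<and> mu G a b = z \<and> g a \<noteq> 0 \<and> f b \<noteq> 0}"
  have bij: "bij_betw (\<lambda>p. (snd p, fst p)) ?A ?B"
    unfolding bij_betw_def
  proof
    show "inj_on (\<lambda>p. (snd p, fst p)) ?A"
    proof (rule inj_onI)
      fix p q :: "'g \<times> 'g" assume "(snd p, fst p) = (snd q, fst q)"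
      thus "p = q" by (simp add: prod_eq_iff)
    qed
    show "(\<lambda>p. (snd p, fst p)) ` ?A = ?B"
    proof
      show "(\<lambda>p. (snd p, fst p)) ` ?A \<subseteq> ?B"
      proof
        fix q assume "q \<in> (\<lambda>p. (snd p, fst p)) ` ?A"
        then obtain p where p: "p \<in> ?A" "q = (snd p, fst p)" by (rule imageE)
        obtain a b where ab: "p = (a,b)" by (cases p)
        have "q = (b,a)" "a \<in> Hz z" "b \<in> Hz z" "mu G a b = z" "f a \<noteq> 0" "g b \<noteq> 0"
          using p unfolding ab by simp_all
        moreover have "mu G b a = z" using Hz_swap[OF \<open>a \<in> Hz z\<close> \<open>b \<in> Hz z\<close> \<open>mu G a b = z\<close> z] .
        ultimately show "q \<in> ?B" by simp
      qed
      show "?B \<subseteq> (\<lambda>p. (snd p, fst p)) ` ?A"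
      proof
        fix p assume "p \<in> ?B"
        obtain a b where ab: "p = (a,b)" by (cases p)
        have "p = (a,b)" "a \<in> Hz z" "b \<in> Hz z" "mu G a b = z" "g a \<noteq> 0" "f b \<noteq> 0"
          using \<open>p \<in> ?B\<close> unfolding ab by simp_all
        moreover have "mu G b a = z" using Hz_swap[OF \<open>a \<in> Hz z\<close> \<open>b \<in> Hz z\<close> \<open>mu G a b = z\<close> z] .
        ultimately have "(b,a) \<in> ?A" "p = (\<lambda>p. (snd p, fst p)) (b,a)" by simp_all
        thus "p \<in> (\<lambda>p. (snd p, fst p)) ` ?A" by (rule rev_image_eqI)
      qed
    qed
  qed
  have "grp_conv G (Hz z) f g z = (\<Sum>p\<in>?A. f (fst p) * g (snd p))" unfolding grp_conv_def by simp
  also have "\<dots> = (\<Sum>p\<in>?A. g (fst (snd p, fst p)) * f (snd (snd p, fst p)))"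
    by (simp add: mult.commute)
  also have "\<dots> = (\<Sum>p\<in>?B. g (fst p) * f (snd p))"
    by (rule sum.reindex_bij_betw[OF bij, of "\<lambda>p. g (fst p) * f (snd p)"])
  also have "\<dots> = grp_conv G (Hz z) g f z" unfolding grp_conv_def by simp
  finally show ?thesis .
qed

lemma MN_conv:
  fixes m n :: "'g \<Rightarrow> 'r::idom"
  assumes mh: "fsupp m \<subseteq> c -` {g}" and nh: "fsupp n \<subseteq> c -` {-g}"
    and z: "z \<in> G0" and g0: "m \<gamma>0 \<noteq> 0" "rg G \<gamma>0 = z"
    and stepA: "\<forall>\<gamma>. m \<gamma> \<noteq> 0 \<longrightarrow> rg G \<gamma> = z \<longrightarrow> sr G \<gamma> = sr G \<gamma>0"
    and k: "k \<in> Hz z"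
  shows "grp_conv G (Hz z) (Mf m \<gamma>0 z) (Nf n (iv G \<gamma>0) z) k = conv G m n k"
proof -
  define M where "M = Mf m \<gamma>0 z"
  define N where "N = Nf n (iv G \<gamma>0) z"
  have cg: "c x = g" if "m x \<noteq> 0" for x using mh that by auto
  have cn: "c x = - g" if "n x \<noteq> 0" for x using nh that by auto
  have kz: "sr G k = z" "rg G k = z" "c k = 0" using k Hz_iff by auto
  define S2 where "S2 = {(h1,h2). h1 \<in> Hz z \<and> h2 \<in> Hz z \<and> mu G h1 h2 = k \<and> M h1 \<noteq> 0 \<and> N h2 \<noteq> 0}"
  define T1 where "T1 = {(a,b). sr G a = rg G b \<and> mu G a b = k \<and> m a \<noteq> 0 \<and> n b \<noteq> 0}"
  define \<psi> where "\<psi> = (\<lambda>p. (mu G (fst p) \<gamma>0, mu G (iv G \<gamma>0) (snd p)))"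
  have prod: "mu G (mu G h1 \<gamma>0) (mu G (iv G \<gamma>0) h2) = mu G h1 h2" if "h1 \<in> Hz z" "h2 \<in> Hz z" for h1 h2
  proof -
    have hz: "sr G h1 = z" "rg G h2 = z" using that Hz_iff by auto
    have "mu G (mu G h1 \<gamma>0) (mu G (iv G \<gamma>0) h2) = mu G h1 (mu G (mu G \<gamma>0 (iv G \<gamma>0)) h2)"
      by (rule assoc4) (simp_all add: hz g0(2))
    also have "mu G \<gamma>0 (iv G \<gamma>0) = rg G h2" using hz g0(2) by simp
    finally show ?thesis by simp
  qed
  have img1: "\<psi> p \<in> T1" if p: "p \<in> S2" for p
  proof -
    obtain h1 h2 where ab: "p = (h1,h2)" by (cases p)
    have h: "h1 \<in> Hz z" "h2 \<in> Hz z" "mu G h1 h2 = k" "M h1 \<noteq> 0" "N h2 \<noteq> 0"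
      using p unfolding ab S2_def by simp_all
    have hz: "sr G h1 = z" "rg G h1 = z" "sr G h2 = z" "rg G h2 = z" using h Hz_iff by auto
    have "sr G (mu G h1 \<gamma>0) = rg G (mu G (iv G \<gamma>0) h2)" using hz g0 by (simp add: s_mu r_mu)
    moreover have "mu G (mu G h1 \<gamma>0) (mu G (iv G \<gamma>0) h2) = k" using prod h by simp
    moreover have "m (mu G h1 \<gamma>0) \<noteq> 0" "n (mu G (iv G \<gamma>0) h2) \<noteq> 0"
      using h unfolding M_def N_def Mf_def Nf_def by simp_all
    ultimately show ?thesis unfolding ab \<psi>_def T1_def by simp
  qed
  have img2: "q \<in> \<psi> ` S2" if q: "q \<in> T1" for q
  proof -
    obtain a b where ab: "q = (a,b)" by (cases q)
    have t: "sr G a = rg G b" "mu G a b = k" "m a \<noteq> 0" "n b \<noteq> 0" using q unfolding ab T1_def by simp_all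
    have ra: "rg G a = z" using r_mu[OF t(1)] t(2) kz by simp
    have sa: "sr G a = sr G \<gamma>0" using stepA t(3) ra by blast
    have sb: "sr G b = z" using s_mu[OF t(1)] t(2) kz by simp
    define h1 where "h1 = mu G a (iv G \<gamma>0)"
    define h2 where "h2 = mu G \<gamma>0 b"
    have h1z: "h1 \<in> Hz z" unfolding Hz_iff h1_def
      using sa ra g0 c_iv cg[OF t(3)] cg[OF g0(1)] by (simp add: c_mu r_mu s_mu)
    have h2z: "h2 \<in> Hz z" unfolding Hz_iff h2_def
      using sa sb t(1) g0 cn[OF t(4)] cg[OF g0(1)] by (simp add: c_mu r_mu s_mu)
    have "mu G h1 \<gamma>0 = mu G a (mu G (iv G \<gamma>0) \<gamma>0)" unfolding h1_def
      by (rule assoc) (simp_all add: sa)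
    also have "\<dots> = mu G a (sr G a)" by (simp add: sa)
    finally have h1g: "mu G h1 \<gamma>0 = a" by simp
    have h2g: "mu G (iv G \<gamma>0) h2 = b" unfolding h2_def using sa t(1) by (simp add: mu_iv_left2)
    have "mu G h1 h2 = k" using prod[OF h1z h2z] h1g h2g t(2) by simp
    moreover have "M h1 \<noteq> 0" "N h2 \<noteq> 0" using h1z h2z h1g h2g t(3,4) unfolding M_def N_def Mf_def Nf_def by simp_all
    ultimately have "(h1,h2) \<in> S2" unfolding S2_def using h1z h2z by simp
    moreover have "q = \<psi> (h1,h2)" unfolding \<psi>_def ab using h1g h2g by simp
    ultimately show ?thesis by (rule rev_image_eqI)
  qed
  have inj: "inj_on \<psi> S2"
  proof (rule inj_onI)
    fix p p' assume p: "p \<in> S2" and p': "p' \<in> S2" and e: "\<psi> p = \<psi> p'"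
    obtain h1 h2 where ab: "p = (h1,h2)" by (cases p)
    obtain h1' h2' where ab': "p' = (h1',h2')" by (cases p')
    have h: "h1 \<in> Hz z" "h2 \<in> Hz z" "h1' \<in> Hz z" "h2' \<in> Hz z"
      using p p' unfolding ab ab' S2_def by simp_all
    have hz: "sr G h1 = z" "rg G h2 = z" "sr G h1' = z" "rg G h2' = z" using h Hz_iff by auto
    have e1: "mu G h1 \<gamma>0 = mu G h1' \<gamma>0" and e2: "mu G (iv G \<gamma>0) h2 = mu G (iv G \<gamma>0) h2'"
      using e unfolding ab ab' \<psi>_def by simp_all
    have "h1 = h1'" by (rule cancel_right[OF _ _ e1]) (simp_all add: hz g0(2))
    moreover have "h2 = h2'" by (rule cancel_left[OF _ _ e2]) (simp_all add: hz g0(2))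
    ultimately show "p = p'" unfolding ab ab' by simp
  qed
  have bij: "bij_betw \<psi> S2 T1" unfolding bij_betw_def using inj img1 img2 by blast
  have "grp_conv G (Hz z) M N k = (\<Sum>p\<in>S2. M (fst p) * N (snd p))" unfolding grp_conv_def S2_def by simp
  also have "\<dots> = (\<Sum>p\<in>S2. m (fst (\<psi> p)) * n (snd (\<psi> p)))"
  proof (rule sum.cong[OF refl])
    fix p assume "p \<in> S2"
    then obtain h1 h2 where "p = (h1,h2)" "h1 \<in> Hz z" "h2 \<in> Hz z" unfolding S2_def by (cases p) simp_all
    thus "M (fst p) * N (snd p) = m (fst (\<psi> p)) * n (snd (\<psi> p))"
      unfolding M_def N_def Mf_def Nf_def \<psi>_def by simp
  qed
  also have "\<dots> = (\<Sum>p\<in>T1. m (fst p) * n (snd p))" by (rule sum.reindex_bij_betw[OF bij])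
  also have "\<dots> = conv G m n k" unfolding conv_def T1_def by simp
  finally show ?thesis unfolding M_def N_def .
qed

end


context ahc begin

lemma norm_st: "normaliser G m n \<Longrightarrow> m \<in> steinberg G" "normaliser G m n \<Longrightarrow> n \<in> steinberg G"
  unfolding normaliser_def by auto

lemma mn_diag:
  fixes m n :: "'g \<Rightarrow> 'r::comm_ring_1"
  assumes nm: "normaliser G m n"
  shows "conv G m n \<in> diag G"
proof -
  have K1: "compact (sr G ` fsupp m)"
    using compact_continuous_image[OF continuous_on_subset[OF cont_s subset_UNIV] st_compact[OF norm_st(1)[OF nm]]] .
  have K2: "sr G ` fsupp m \<subseteq> G0" by (rule image_subsetI) simp
  obtain V where V: "compact V" "open V" "V \<subseteq> G0" "sr G ` fsupp m \<subseteq> V"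
    using unit_cover[OF K1 K2] by blast
  define d :: "'g \<Rightarrow> 'r" where "d = indicator V"
  have dD: "d \<in> diag G" unfolding d_def using indicator_diag V by blast
  have "conv G m d = m"
  proof
    fix \<eta>
    have "conv G m d \<eta> = m \<eta> * d (sr G \<eta>)" using conv_unit_right[OF diag_supp[OF dD]] .
    moreover have "d (sr G \<eta>) = 1" if "m \<eta> \<noteq> 0"
    proof -
      have "\<eta> \<in> fsupp m" using that by simp
      hence "sr G \<eta> \<in> sr G ` fsupp m" by (rule imageI)
      hence "sr G \<eta> \<in> V" using V(4) by blast
      thus ?thesis unfolding d_def by simp
    qed
    ultimately show "conv G m d \<eta> = m \<eta>" by (cases "m \<eta> = 0") auto
  qed
  moreover have "conv G (conv G m d) n \<in> diag G" using nm dD unfolding normaliser_def by blast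
  ultimately show ?thesis by simp
qed

lemma mn_one:
  fixes m n :: "'g \<Rightarrow> 'r::idom"
  assumes nm: "normaliser G m n" and g: "m \<gamma> \<noteq> 0"
  shows "conv G m n (rg G \<gamma>) = 1"
proof -
  have p: "fsupp (conv G m n) \<subseteq> G0" using diag_supp[OF mn_diag[OF nm]] .
  have "conv G (conv G m n) m = m" using nm unfolding normaliser_def by blast
  hence "conv G (conv G m n) m \<gamma> = m \<gamma>" by simp
  hence "conv G m n (rg G \<gamma>) * m \<gamma> = m \<gamma>" using conv_unit_left[OF p] by simp
  thus ?thesis using g by simp
qed

lemma key_point:
  fixes m n :: "'g \<Rightarrow> 'r::idom"
  assumes nm: "normaliser G m n" and mh: "fsupp m \<subseteq> c -` {g}" and nh: "fsupp n \<subseteq> c -` {-g}"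
    and z: "z \<in> G0" and good: "grp_ring_good G (Hz z) z TYPE('r)"
    and g0: "m \<gamma>0 \<noteq> 0" "rg G \<gamma>0 = z"
  shows "(\<forall>\<gamma>. m \<gamma> \<noteq> 0 \<longrightarrow> rg G \<gamma> = z \<longrightarrow> \<gamma> = \<gamma>0) \<and> n (iv G \<gamma>0) \<noteq> 0"
proof -
  have mst: "m \<in> steinberg G" "n \<in> steinberg G" using norm_st nm by auto
  have cg: "c x = g" if "m x \<noteq> 0" for x using mh that by auto
  have cn: "c x = - g" if "n x \<noteq> 0" for x using nh that by auto
  have zz: "sr G z = z" "rg G z = z" using z unitD unitD2 by auto
  have zH: "z \<in> Hz z" using Hz_unit[OF z] .
  have p1: "conv G m n z = 1" using mn_one[OF nm g0(1)] g0(2) by simp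
  have good1: "\<And>f h. f \<in> grp_ring (Hz z) \<Longrightarrow> h \<in> grp_ring (Hz z) \<Longrightarrow> f \<noteq> (\<lambda>_. 0::'r) \<Longrightarrow> h \<noteq> (\<lambda>_. 0)
      \<Longrightarrow> grp_conv G (Hz z) f h \<noteq> (\<lambda>_. 0)"
    using good unfolding grp_ring_good_def by blast
  have good2: "\<And>f::'g \<Rightarrow> 'r. f \<in> grp_ring (Hz z) \<Longrightarrow> h \<in> grp_ring (Hz z) \<Longrightarrow>
      grp_conv G (Hz z) f h = (\<lambda>k. if k = z then 1 else 0) \<Longrightarrow> grp_conv G (Hz z) h f = (\<lambda>k. if k = z then 1 else 0)
      \<Longrightarrow> (\<exists>u x. x \<in> Hz z \<and> f = (\<lambda>k. if k = x then u else 0))" for h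
    using good unfolding grp_ring_good_def by blast
  have stepA: "\<forall>\<gamma>. m \<gamma> \<noteq> 0 \<longrightarrow> rg G \<gamma> = z \<longrightarrow> sr G \<gamma> = sr G \<gamma>0"
  proof (intro allI impI, rule ccontr)
    fix \<gamma>1 assume g1: "m \<gamma>1 \<noteq> 0" "rg G \<gamma>1 = z" and ne: "sr G \<gamma>1 \<noteq> sr G \<gamma>0"
    have nob: "n b = 0" if sb: "sr G b = z" for b
    proof (rule ccontr)
      assume nb: "n b \<noteq> 0"
      obtain \<gamma> where gm: "m \<gamma> \<noteq> 0" "rg G \<gamma> = z" "rg G b \<noteq> sr G \<gamma>"
      proof (cases "rg G b = sr G \<gamma>0")
        case True
        hence "rg G b \<noteq> sr G \<gamma>1" using ne by simp
        thus ?thesis using that g1 by blast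
      next
        case False thus ?thesis using that g0 by blast
      qed
      define Nb where "Nb = Nf n b z"
      define M where "M = Mf m \<gamma> z"
      have zero: "grp_conv G (Hz z) Nb M = (\<lambda>_. 0)"
      proof
        fix k show "grp_conv G (Hz z) Nb M k = 0"
        proof (cases "k \<in> Hz z")
          case True
          have kz: "sr G k = z" "rg G k = z" using True Hz_iff by auto
          have "mu G b (mu G k \<gamma>) \<notin> G0"
          proof
            assume u: "mu G b (mu G k \<gamma>) \<in> G0"
            have "rg G (mu G b (mu G k \<gamma>)) = rg G b" using sb kz gm by (simp add: r_mu)
            moreover have "sr G (mu G b (mu G k \<gamma>)) = sr G \<gamma>" using sb kz gm by (simp add: r_mu s_mu)
            moreover have "rg G (mu G b (mu G k \<gamma>)) = sr G (mu G b (mu G k \<gamma>))"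
              using unitD[OF u] unitD2[OF u] by simp
            ultimately show False using gm(3) by simp
          qed
          thus ?thesis unfolding Nb_def M_def Nf_def Mf_def
            using sandwich[OF nm mh nh z sb cn[OF nb] gm(1,2) True] by simp
        next
          case False thus ?thesis by (rule grp_conv_outside)
        qed
      qed
      have "Nb \<in> grp_ring (Hz z)" unfolding Nb_def using Nf_ring[OF st_compact[OF mst(2)] sb] .
      moreover have "M \<in> grp_ring (Hz z)" unfolding M_def using Mf_ring[OF st_compact[OF mst(1)] gm(2)] .
      moreover have "Nb z \<noteq> 0" unfolding Nb_def Nf_def using zH nb sb mu_s[of b] by simp
      hence "Nb \<noteq> (\<lambda>_. 0)" by auto
      moreover have "M z \<noteq> 0" unfolding M_def Mf_def using zH gm mu_r[of \<gamma>] by simp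
      hence "M \<noteq> (\<lambda>_. 0)" by auto
      ultimately show False using good1 zero by blast
    qed
    have "conv G m n z = 0"
    proof -
      have "{(a,b). sr G a = rg G b \<and> mu G a b = z \<and> m a \<noteq> 0 \<and> n b \<noteq> 0} = {}"
      proof (rule equals0I)
        fix p assume "p \<in> {(a,b). sr G a = rg G b \<and> mu G a b = z \<and> m a \<noteq> 0 \<and> n b \<noteq> 0}"
        then obtain a b where ab: "p = (a,b)" "sr G a = rg G b" "mu G a b = z" "n b \<noteq> 0" by blast
        have "sr G b = z" using s_mu[OF ab(2)] ab(3) zz by simp
        thus False using nob ab(4) by simp
      qed
      thus ?thesis unfolding conv_def by (simp only:) simp
    qed
    thus False using p1 by simp
  qed
  define M where "M = Mf m \<gamma>0 z"
  define N where "N = Nf n (iv G \<gamma>0) z"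
  have Mr: "M \<in> grp_ring (Hz z)" unfolding M_def using Mf_ring[OF st_compact[OF mst(1)] g0(2)] .
  have Nr: "N \<in> grp_ring (Hz z)" unfolding N_def using Nf_ring[OF st_compact[OF mst(2)], of "iv G \<gamma>0" z] g0(2) by simp
  have pdiag: "conv G m n \<in> diag G" using mn_diag[OF nm] .
  have MN: "grp_conv G (Hz z) M N = (\<lambda>k. if k = z then 1 else 0)"
  proof
    fix k show "grp_conv G (Hz z) M N k = (if k = z then 1 else 0)"
    proof (cases "k \<in> Hz z")
      case True
      have "grp_conv G (Hz z) M N k = conv G m n k"
        unfolding M_def N_def using MN_conv[OF mh nh z g0 stepA True] .
      moreover have "k \<noteq> z \<Longrightarrow> conv G m n k = 0"
        using diag_zero[OF pdiag] Hz_unit_iff[OF True] by blast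
      ultimately show ?thesis using p1 by auto
    next
      case False
      thus ?thesis using grp_conv_outside[OF False] zH by auto
    qed
  qed
  have NM: "grp_conv G (Hz z) N M = (\<lambda>k. if k = z then 1 else 0)"
  proof
    fix k show "grp_conv G (Hz z) N M k = (if k = z then 1 else 0)"
    proof (cases "k \<in> Hz z")
      case True
      show ?thesis
      proof (cases "k = z")
        case True
        thus ?thesis using grp_conv_swap[OF z, of N M] MN by simp
      next
        case False
        have kz: "sr G k = z" "rg G k = z" using \<open>k \<in> Hz z\<close> Hz_iff by auto
        have sb: "sr G (iv G \<gamma>0) = z" using g0 by simp
        have "mu G (iv G \<gamma>0) (mu G k \<gamma>0) \<notin> G0"
        proof
          assume u: "mu G (iv G \<gamma>0) (mu G k \<gamma>0) \<in> G0"
          have "mu G k \<gamma>0 = iv G (iv G \<gamma>0)"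
            by (rule mu_unit_eq_iv[OF _ u]) (simp add: r_mu kz g0(2))
          hence e: "mu G k \<gamma>0 = mu G z \<gamma>0" using g0(2) mu_r[of \<gamma>0] by simp
          have "k = z" by (rule cancel_right[OF _ _ e]) (simp_all add: kz zz g0(2))
          thus False using False by simp
        qed
        hence "grp_conv G (Hz z) N M k = 0" unfolding N_def M_def Nf_def Mf_def
          using sandwich[OF nm mh nh z sb _ g0 \<open>k \<in> Hz z\<close>] c_iv cg[OF g0(1)] by simp
        thus ?thesis using False by simp
      qed
    next
      case False
      thus ?thesis using grp_conv_outside[OF False] zH by auto
    qed
  qed
  obtain u x where ux: "x \<in> Hz z" "M = (\<lambda>k. if k = x then u else 0)"
    using good2[OF Mr Nr MN NM] by blast
  have "M z \<noteq> 0" unfolding M_def Mf_def using zH g0 mu_r[of \<gamma>0] by simp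
  hence xz: "x = z" using ux by (auto split: if_splits)
  have uniq: "\<forall>\<gamma>. m \<gamma> \<noteq> 0 \<longrightarrow> rg G \<gamma> = z \<longrightarrow> \<gamma> = \<gamma>0"
  proof (intro allI impI)
    fix \<gamma> assume gm: "m \<gamma> \<noteq> 0" "rg G \<gamma> = z"
    have sg: "sr G \<gamma> = sr G \<gamma>0" using stepA gm by blast
    define h where "h = mu G \<gamma> (iv G \<gamma>0)"
    have hz: "h \<in> Hz z" unfolding Hz_iff h_def
      using sg gm g0 c_iv cg[OF gm(1)] cg[OF g0(1)] by (simp add: c_mu r_mu s_mu)
    have "mu G h \<gamma>0 = mu G \<gamma> (mu G (iv G \<gamma>0) \<gamma>0)" unfolding h_def
      by (rule assoc) (simp_all add: sg)
    also have "\<dots> = mu G \<gamma> (sr G \<gamma>)" by (simp add: sg)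
    finally have hg: "mu G h \<gamma>0 = \<gamma>" by simp
    have "M h \<noteq> 0" unfolding M_def Mf_def using hz hg gm by simp
    hence "h = z" using ux xz by (auto split: if_splits)
    thus "\<gamma> = \<gamma>0" using hg g0(2) mu_r[of \<gamma>0] by simp
  qed
  have "conv G m n z = m \<gamma>0 * n (mu G (iv G \<gamma>0) z)"
  proof (rule conv_at)
    show "rg G \<gamma>0 = rg G z" using g0 zz by simp
    show "\<forall>a'\<in>fsupp m. rg G a' = rg G z \<longrightarrow> a' = \<gamma>0" using uniq zz by simp
  qed
  moreover have "mu G (iv G \<gamma>0) z = iv G \<gamma>0" using g0(2) mu_s[of "iv G \<gamma>0"] by simp
  ultimately have "n (iv G \<gamma>0) \<noteq> 0" using p1 by auto
  thus ?thesis using uniq by blast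
qed

end


context ahc begin

definition goodX :: "'g set \<Rightarrow> 'r::comm_ring_1 itself \<Rightarrow> bool" where
  "goodX X R \<longleftrightarrow> X \<subseteq> G0 \<and> G0 \<subseteq> closure X \<and> (\<forall>x\<in>X. grp_ring_good G (Hz x) x R)"

lemma goodX_dense:
  assumes "goodX X R" "open Q" "y \<in> Q" "y \<in> G0"
  obtains x where "x \<in> X" "x \<in> Q" "grp_ring_good G (Hz x) x R" "x \<in> G0"
proof -
  have X: "X \<subseteq> G0" "G0 \<subseteq> closure X" "\<forall>x\<in>X. grp_ring_good G (Hz x) x R"
    using assms(1) unfolding goodX_def by auto
  obtain x where "x \<in> X" "x \<in> Q" using density[OF X(1,2) assms(2,3,4)] by blast
  thus ?thesis using that X by blast
qed

lemma key_global:
  fixes m n :: "'g \<Rightarrow> 'r::idom"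
  assumes nm: "normaliser G m n" and mh: "fsupp m \<subseteq> c -` {g}" and nh: "fsupp n \<subseteq> c -` {-g}"
    and gX: "goodX X TYPE('r)"
  shows "rinj m" "\<And>\<gamma>. m \<gamma> \<noteq> 0 \<Longrightarrow> n (iv G \<gamma>) \<noteq> 0"
proof -
  have mst: "m \<in> steinberg G" "n \<in> steinberg G" using norm_st nm by auto
  show "rinj m" unfolding rinj_def
  proof (intro ballI impI, rule ccontr)
    fix a1 a2 assume a: "a1 \<in> fsupp m" "a2 \<in> fsupp m" "rg G a1 = rg G a2" and ne: "a1 \<noteq> a2"
    obtain O1 O2 where O: "open O1" "open O2" "a1 \<in> O1" "a2 \<in> O2" "O1 \<inter> O2 = {}"
      using hausdorff[OF ne] by blast
    obtain W1 where W1: "open W1" "a1 \<in> W1" "inj_on (rg G) W1" using lh_nbhd[OF lh_r] by blast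
    obtain W2 where W2: "open W2" "a2 \<in> W2" "inj_on (rg G) W2" using lh_nbhd[OF lh_r] by blast
    define P1 where "P1 = O1 \<inter> W1 \<inter> fsupp m"
    define P2 where "P2 = O2 \<inter> W2 \<inter> fsupp m"
    have P: "open P1" "open P2" unfolding P1_def P2_def using O W1 W2 st_open[OF mst(1)] by auto
    define Q where "Q = rg G ` P1 \<inter> rg G ` P2"
    have oQ: "open Q" unfolding Q_def using r_open P by blast
    have "a1 \<in> P1" "a2 \<in> P2" unfolding P1_def P2_def using a O W1 W2 by auto
    hence "rg G a1 \<in> rg G ` P1" "rg G a1 \<in> rg G ` P2" using a(3) by (auto intro: rev_image_eqI)
    hence aQ: "rg G a1 \<in> Q" unfolding Q_def by blast
    obtain x where x: "x \<in> Q" "grp_ring_good G (Hz x) x TYPE('r)" "x \<in> G0"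
      using goodX_dense[OF gX oQ aQ r_unit] by blast
    have xP: "x \<in> rg G ` P1" "x \<in> rg G ` P2" using x(1) unfolding Q_def by blast+
    obtain b1 where b1': "x = rg G b1" "b1 \<in> P1" using xP(1) by (rule imageE)
    obtain b2 where b2': "x = rg G b2" "b2 \<in> P2" using xP(2) by (rule imageE)
    have b1: "b1 \<in> P1" "rg G b1 = x" and b2: "b2 \<in> P2" "rg G b2 = x" using b1' b2' by simp_all
    have "b1 \<noteq> b2" using b1 b2 O(5) unfolding P1_def P2_def by blast
    moreover have "m b1 \<noteq> 0" "m b2 \<noteq> 0" using b1 b2 unfolding P1_def P2_def by auto
    ultimately show False using key_point[OF nm mh nh x(3) x(2), of b1] b1 b2 by blast
  qed
  show "n (iv G \<gamma>) \<noteq> 0" if g: "m \<gamma> \<noteq> 0" for \<gamma>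
  proof (rule ccontr)
    assume "\<not> n (iv G \<gamma>) \<noteq> 0"
    define P where "P = fsupp m \<inter> iv G -` (- fsupp n)"
    have "open (- fsupp n)" using st_closed[OF mst(2)] by (simp add: open_Compl)
    hence "open (iv G -` (- fsupp n))" using open_vimage_cont[OF cont_iv] by blast
    hence "open P" unfolding P_def using st_open[OF mst(1)] by blast
    hence oP: "open (rg G ` P)" by (rule r_open)
    have "\<gamma> \<in> P" unfolding P_def using g \<open>\<not> n (iv G \<gamma>) \<noteq> 0\<close> by simp
    hence gP: "rg G \<gamma> \<in> rg G ` P" by (rule imageI)
    obtain x where x: "x \<in> rg G ` P" "grp_ring_good G (Hz x) x TYPE('r)" "x \<in> G0"
      using goodX_dense[OF gX oP gP r_unit] by blast
    obtain b where b': "x = rg G b" "b \<in> P" using x(1) by (rule imageE)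
    have b: "b \<in> P" "rg G b = x" using b' by simp_all
    have "m b \<noteq> 0" "n (iv G b) = 0" using b unfolding P_def by auto
    thus False using key_point[OF nm mh nh x(3) x(2), of b] b(2) by blast
  qed
qed

end


context ahc begin

definition inv_pair :: "'g set \<Rightarrow> 'g set \<Rightarrow> bool" where
  "inv_pair F H \<longleftrightarrow> (\<forall>a\<in>F. \<forall>b\<in>H. rg G b = sr G a \<longrightarrow> b = iv G a)"

definition goodpair :: "('g \<Rightarrow> 'r::comm_ring_1) \<Rightarrow> ('g \<Rightarrow> 'r) \<Rightarrow> bool" where
  "goodpair A B \<longleftrightarrow> normaliser G A B \<and> rinj A \<and> rinj B \<and> inj_on (sr G) (fsupp A) \<and> inj_on (sr G) (fsupp B)
      \<and> fsupp B = iv G ` fsupp A"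

lemma goodpair_sym: assumes "goodpair A B" shows "goodpair B A"
proof -
  have "fsupp B = iv G ` fsupp A" using assms unfolding goodpair_def by blast
  hence "iv G ` fsupp B = fsupp A" by (simp add: image_image)
  thus ?thesis using assms normaliser_sym unfolding goodpair_def by metis
qed

lemma inv_pair_supp:
  fixes f h :: "'g \<Rightarrow> 'r::comm_ring_1"
  assumes f: "rinj f" and ip: "inv_pair (fsupp f) (fsupp h)"
  shows "fsupp (conv G f h) \<subseteq> G0"
proof
  fix \<zeta> assume z: "\<zeta> \<in> fsupp (conv G f h)"
  obtain a where a: "rg G a = rg G \<zeta>" "\<forall>a'\<in>fsupp f. rg G a' = rg G \<zeta> \<longrightarrow> a' = a"
    using pick_exists[OF f] by blast
  have "conv G f h \<zeta> = f a * h (mu G (iv G a) \<zeta>)" using conv_at[OF a] .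
  hence ne: "f a \<noteq> 0" "h (mu G (iv G a) \<zeta>) \<noteq> 0" using z by auto
  have "rg G (mu G (iv G a) \<zeta>) = sr G a" using a(1) by (simp add: r_mu)
  moreover have "a \<in> fsupp f" "mu G (iv G a) \<zeta> \<in> fsupp h" using ne by simp_all
  ultimately have "mu G (iv G a) \<zeta> = iv G a" using ip unfolding inv_pair_def by blast
  hence "\<zeta> = mu G a (iv G a)" using mu_iv_left[OF a(1)] by simp
  thus "\<zeta> \<in> G0" by simp
qed

lemma inv_pair_diag:
  fixes f h :: "'g \<Rightarrow> 'r::comm_ring_1"
  assumes "f \<in> steinberg G" "h \<in> steinberg G" "rinj f" "inv_pair (fsupp f) (fsupp h)"
  shows "conv G f h \<in> diag G"
  unfolding diag_def using steinberg_conv[OF assms(1-3)] inv_pair_supp[OF assms(3,4)] by simp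

lemma inv_pair_sandwich:
  fixes f h d :: "'g \<Rightarrow> 'r::comm_ring_1"
  assumes "f \<in> steinberg G" "h \<in> steinberg G" "rinj f" "inv_pair (fsupp f) (fsupp h)" "d \<in> diag G"
  shows "conv G (conv G f d) h \<in> diag G"
proof (rule inv_pair_diag)
  have ds: "d \<in> steinberg G" "fsupp d \<subseteq> G0" using assms(5) unfolding diag_def by auto
  show "conv G f d \<in> steinberg G" using steinberg_conv[OF assms(1) ds(1) assms(3)] .
  show "h \<in> steinberg G" by fact
  show "rinj (conv G f d)" using rinj_conv[OF assms(3) rinj_units[OF ds(2)]] .
  show "inv_pair (fsupp (conv G f d)) (fsupp h)"
    using assms(4) conv_units_supp(1)[OF ds(2), of f] unfolding inv_pair_def by blast
qed

lemma goodpair_inv_pair: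
  assumes "goodpair A B" shows "inv_pair (fsupp A) (fsupp B)"
  unfolding inv_pair_def
proof (intro ballI impI)
  fix a b assume a: "a \<in> fsupp A" and b: "b \<in> fsupp B" and e: "rg G b = sr G a"
  obtain a' where a': "a' \<in> fsupp A" "b = iv G a'" using b assms unfolding goodpair_def by blast
  have "sr G a' = sr G a" using e a' by simp
  moreover have "inj_on (sr G) (fsupp A)" using assms unfolding goodpair_def by blast
  ultimately have "a' = a" using a a'(1) by (simp add: inj_on_eq_iff)
  thus "b = iv G a" using a' by simp
qed

lemma key_goodpair:
  fixes m n :: "'g \<Rightarrow> 'r::idom"
  assumes "(m,n) \<in> normalisers G c g" and gX: "goodX X TYPE('r)"
  shows "goodpair m n"
proof -
  have nm: "normaliser G m n" and mh: "fsupp m \<subseteq> c -` {g}" and nh: "fsupp n \<subseteq> c -` {-g}"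
    using assms(1) unfolding normalisers_def homog_def by auto
  have nm': "normaliser G n m" using nm normaliser_sym by blast
  have mh': "fsupp m \<subseteq> c -` {- (- g)}" using mh by simp
  have rm: "rinj m" and mn: "\<And>\<gamma>. m \<gamma> \<noteq> 0 \<Longrightarrow> n (iv G \<gamma>) \<noteq> 0"
    using key_global[OF nm mh nh gX] by auto
  have rn: "rinj n" and nm2: "\<And>\<gamma>. n \<gamma> \<noteq> 0 \<Longrightarrow> m (iv G \<gamma>) \<noteq> 0"
    using key_global[OF nm' nh mh' gX] by auto
  have eq: "fsupp n = iv G ` fsupp m"
  proof
    show "fsupp n \<subseteq> iv G ` fsupp m"
    proof
      fix b assume "b \<in> fsupp n"
      hence "iv G b \<in> fsupp m" using nm2 by simp
      hence "iv G (iv G b) \<in> iv G ` fsupp m" by (rule imageI)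
      thus "b \<in> iv G ` fsupp m" by simp
    qed
    show "iv G ` fsupp m \<subseteq> fsupp n" using mn by auto
  qed
  have sm: "inj_on (sr G) (fsupp m)"
  proof (rule inj_onI)
    fix a1 a2 assume a: "a1 \<in> fsupp m" "a2 \<in> fsupp m" "sr G a1 = sr G a2"
    have "iv G a1 \<in> fsupp n" "iv G a2 \<in> fsupp n" using a mn by auto
    moreover have "rg G (iv G a1) = rg G (iv G a2)" using a(3) by simp
    ultimately have "iv G a1 = iv G a2" using rn unfolding rinj_def by blast
    thus "a1 = a2" by (rule iv_inj)
  qed
  have sn: "inj_on (sr G) (fsupp n)"
  proof (rule inj_onI)
    fix a1 a2 assume a: "a1 \<in> fsupp n" "a2 \<in> fsupp n" "sr G a1 = sr G a2"
    have "iv G a1 \<in> fsupp m" "iv G a2 \<in> fsupp m" using a nm2 by auto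
    moreover have "rg G (iv G a1) = rg G (iv G a2)" using a(3) by simp
    ultimately have "iv G a1 = iv G a2" using rm unfolding rinj_def by blast
    thus "a1 = a2" by (rule iv_inj)
  qed
  show ?thesis unfolding goodpair_def using nm rm rn sm sn eq by blast
qed

lemma conv_prod_at:
  fixes f h :: "'g \<Rightarrow> 'r::comm_ring_1"
  assumes "rinj f" "f a \<noteq> 0" "sr G a = rg G b"
  shows "conv G f h (mu G a b) = f a * h b"
  using conv_rinj[OF assms(1), of a "mu G a b" h] assms by (simp add: r_mu mu_iv_left2)

lemma inv_pair_prod:
  fixes A1 B1 A2 B2 :: "'g \<Rightarrow> 'r::comm_ring_1"
  assumes g1: "goodpair A1 B1" and g2: "goodpair A2 B2"
  shows "inv_pair (fsupp (conv G A1 A2)) (fsupp (conv G B2 B1))"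
  unfolding inv_pair_def
proof (intro ballI impI)
  fix a b assume a: "a \<in> fsupp (conv G A1 A2)" and b: "b \<in> fsupp (conv G B2 B1)" and e: "rg G b = sr G a"
  obtain a1 a2 where aa: "a1 \<in> fsupp A1" "a2 \<in> fsupp A2" "sr G a1 = rg G a2" "a = mu G a1 a2"
    using supp_conv a by (blast elim: setmulE)
  obtain b2 b1 where bb: "b2 \<in> fsupp B2" "b1 \<in> fsupp B1" "sr G b2 = rg G b1" "b = mu G b2 b1"
    using supp_conv b by (blast elim: setmulE)
  have "rg G b2 = sr G a2" using e aa bb by (simp add: r_mu s_mu)
  hence b2e: "b2 = iv G a2" using goodpair_inv_pair[OF g2] aa bb unfolding inv_pair_def by blast
  have "rg G b1 = sr G a1" using bb b2e aa by simp
  hence b1e: "b1 = iv G a1" using goodpair_inv_pair[OF g1] aa bb unfolding inv_pair_def by blast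
  show "b = iv G a" using bb b2e b1e aa by (simp add: iv_mu_distrib)
qed

lemma goodpair_st: "goodpair A B \<Longrightarrow> A \<in> steinberg G" "goodpair A B \<Longrightarrow> B \<in> steinberg G"
  unfolding goodpair_def using norm_st by auto

lemma goodpair_rinj: "goodpair A B \<Longrightarrow> rinj A" "goodpair A B \<Longrightarrow> rinj B"
  unfolding goodpair_def by auto

lemma triple:
  fixes A1 B1 A2 B2 :: "'g \<Rightarrow> 'r::idom"
  assumes g1: "goodpair A1 B1" and g2: "goodpair A2 B2"
  shows "conv G (conv G (conv G A1 A2) (conv G B2 B1)) (conv G A1 A2) = conv G A1 A2"
proof
  fix \<zeta>
  let ?P = "conv G (conv G A1 A2) (conv G B2 B1)"
  have rA: "rinj (conv G A1 A2)" using rinj_conv[OF goodpair_rinj(1)[OF g1] goodpair_rinj(1)[OF g2]] .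
  have rB: "rinj (conv G B2 B1)" using rinj_conv[OF goodpair_rinj(2)[OF g2] goodpair_rinj(2)[OF g1]] .
  have Ps: "fsupp ?P \<subseteq> G0" using inv_pair_supp[OF rA inv_pair_prod[OF g1 g2]] .
  have "conv G ?P (conv G A1 A2) \<zeta> = ?P (rg G \<zeta>) * conv G A1 A2 \<zeta>" using conv_unit_left[OF Ps] .
  moreover have "?P (rg G \<zeta>) = 1" if ne: "conv G A1 A2 \<zeta> \<noteq> 0"
  proof -
    have "\<zeta> \<in> fsupp (conv G A1 A2)" using ne by simp
    hence "\<zeta> \<in> setmul (fsupp A1) (fsupp A2)" using supp_conv by blast
    then obtain a1 a2 where aa: "a1 \<in> fsupp A1" "a2 \<in> fsupp A2" "sr G a1 = rg G a2" "\<zeta> = mu G a1 a2"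
      by (rule setmulE)
    have nm1: "normaliser G A1 B1" and nm2: "normaliser G A2 B2" using g1 g2 unfolding goodpair_def by auto
    have r1: "rinj A1" "rinj B1" and r2: "rinj A2" "rinj B2" using g1 g2 goodpair_rinj by auto
    have one1: "A1 a1 * B1 (iv G a1) = 1"
      using mn_one[OF nm1, of a1] conv_prod_at[OF r1(1), of a1 "iv G a1" B1] aa by simp
    have one2: "A2 a2 * B2 (iv G a2) = 1"
      using mn_one[OF nm2, of a2] conv_prod_at[OF r2(1), of a2 "iv G a2" B2] aa by simp
    have "conv G A1 A2 \<zeta> = A1 a1 * A2 a2" using conv_prod_at[OF r1(1), of a1 a2 A2] aa by simp
    moreover have "iv G \<zeta> = mu G (iv G a2) (iv G a1)" using aa by (simp add: iv_mu_distrib)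
    moreover have "B2 (iv G a2) \<noteq> 0" using one2 by auto
    hence "conv G B2 B1 (mu G (iv G a2) (iv G a1)) = B2 (iv G a2) * B1 (iv G a1)"
      using conv_prod_at[OF r2(2), of "iv G a2" "iv G a1" B1] aa by simp
    moreover have "?P (rg G \<zeta>) = conv G A1 A2 \<zeta> * conv G B2 B1 (iv G \<zeta>)"
      using conv_prod_at[OF rA ne, of "iv G \<zeta>" "conv G B2 B1"] by simp
    ultimately have "?P (rg G \<zeta>) = (A1 a1 * B1 (iv G a1)) * (A2 a2 * B2 (iv G a2))"
      by (simp add: algebra_simps)
    thus ?thesis using one1 one2 by simp
  qed
  ultimately show "conv G ?P (conv G A1 A2) \<zeta> = conv G A1 A2 \<zeta>"
    by (cases "conv G A1 A2 \<zeta> = 0") auto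
qed

lemma prod_normaliser:
  fixes A1 B1 A2 B2 :: "'g \<Rightarrow> 'r::idom"
  assumes g1: "goodpair A1 B1" and g2: "goodpair A2 B2"
  shows "normaliser G (conv G A1 A2) (conv G B2 B1)"
proof -
  have g1': "goodpair B1 A1" and g2': "goodpair B2 A2" using goodpair_sym g1 g2 by auto
  have rA: "rinj (conv G A1 A2)" using rinj_conv[OF goodpair_rinj(1)[OF g1] goodpair_rinj(1)[OF g2]] .
  have rB: "rinj (conv G B2 B1)" using rinj_conv[OF goodpair_rinj(2)[OF g2] goodpair_rinj(2)[OF g1]] .
  have sA: "conv G A1 A2 \<in> steinberg G"
    using steinberg_conv[OF goodpair_st(1)[OF g1] goodpair_st(1)[OF g2] goodpair_rinj(1)[OF g1]] .
  have sB: "conv G B2 B1 \<in> steinberg G"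
    using steinberg_conv[OF goodpair_st(2)[OF g2] goodpair_st(2)[OF g1] goodpair_rinj(2)[OF g2]] .
  show ?thesis unfolding normaliser_def
  proof (intro conjI ballI)
    show "conv G A1 A2 \<in> steinberg G" "conv G B2 B1 \<in> steinberg G" by fact+
    fix d :: "'g \<Rightarrow> 'r" assume d: "d \<in> diag G"
    show "conv G (conv G (conv G A1 A2) d) (conv G B2 B1) \<in> diag G"
      using inv_pair_sandwich[OF sA sB rA inv_pair_prod[OF g1 g2] d] .
    show "conv G (conv G (conv G B2 B1) d) (conv G A1 A2) \<in> diag G"
      using inv_pair_sandwich[OF sB sA rB inv_pair_prod[OF g2' g1'] d] .
  next
    show "conv G (conv G (conv G A1 A2) (conv G B2 B1)) (conv G A1 A2) = conv G A1 A2"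
      using triple[OF g1 g2] .
    show "conv G (conv G (conv G B2 B1) (conv G A1 A2)) (conv G B2 B1) = conv G B2 B1"
      using triple[OF g2' g1'] .
  qed
qed

end


context ahc begin

definition pt :: "('g \<Rightarrow> 'r::zero) \<Rightarrow> 'g \<Rightarrow> 'g" where
  "pt m x = (THE \<eta>. \<eta> \<in> fsupp m \<and> sr G \<eta> = x)"

lemma alpha_pt: "alpha G (fsupp m) x = rg G (pt m x)"
  unfolding alpha_def pt_def ..

lemma pt_eq: assumes "inj_on (sr G) (fsupp m)" "\<eta> \<in> fsupp m" "sr G \<eta> = x"
  shows "pt m x = \<eta>"
  unfolding pt_def
proof (rule the_equality)
  show "\<eta> \<in> fsupp m \<and> sr G \<eta> = x" using assms by simp
  fix \<eta>' assume "\<eta>' \<in> fsupp m \<and> sr G \<eta>' = x"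
  thus "\<eta>' = \<eta>" using assms inj_on_eq_iff by metis
qed

lemma pt_prop: assumes "inj_on (sr G) (fsupp m)" "x \<in> sr G ` fsupp m"
  shows "pt m x \<in> fsupp m" "sr G (pt m x) = x"
proof -
  obtain \<eta> where "\<eta> \<in> fsupp m" "sr G \<eta> = x" using assms(2) by blast
  moreover hence "pt m x = \<eta>" using pt_eq assms(1) by blast
  ultimately show "pt m x \<in> fsupp m" "sr G (pt m x) = x" by simp_all
qed

lemma Tset_iff: "(((m,n),g,x) \<in> Tset G c) \<longleftrightarrow> (m,n) \<in> normalisers G c g \<and> x \<in> sr G ` fsupp m"
  unfolding Tset_def by simp

lemma T_good:
  fixes m n :: "'g \<Rightarrow> 'r::idom"
  assumes "((m,n),g,x) \<in> Tset G c" "goodX X TYPE('r)"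
  shows "goodpair m n"
  using assms key_goodpair Tset_iff by blast

lemma T_pt:
  fixes m n :: "'g \<Rightarrow> 'r::idom"
  assumes "((m,n),g,x) \<in> Tset G c" "goodX X TYPE('r)"
  shows "pt m x \<in> fsupp m" "sr G (pt m x) = x"
proof -
  have "inj_on (sr G) (fsupp m)" using T_good[OF assms] unfolding goodpair_def by blast
  moreover have "x \<in> sr G ` fsupp m" using assms(1) Tset_iff by blast
  ultimately show "pt m x \<in> fsupp m" "sr G (pt m x) = x" using pt_prop by blast+
qed

lemma Trel_iff:
  fixes m1 n1 m2 n2 :: "'g \<Rightarrow> 'r::idom"
  assumes gX: "goodX X TYPE('r)" and t1: "((m1,n1),g1,x1) \<in> Tset G c" and t2: "((m2,n2),g2,x2) \<in> Tset G c"
  shows "(((m1,n1),g1,x1),((m2,n2),g2,x2)) \<in> Trel G c \<longleftrightarrow> x1 = x2 \<and> pt m1 x1 = pt m2 x2"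
proof -
  have gp1: "goodpair m1 n1" and gp2: "goodpair m2 n2" using T_good[OF t1 gX] T_good[OF t2 gX] by auto
  have st1: "m1 \<in> steinberg G" "n1 \<in> steinberg G" and st2: "m2 \<in> steinberg G" "n2 \<in> steinberg G"
    using goodpair_st gp1 gp2 by auto
  have r1: "rinj m1" using gp1 goodpair_rinj by auto
  have s1: "inj_on (sr G) (fsupp m1)" and s2: "inj_on (sr G) (fsupp m2)"
    and e2: "fsupp n2 = iv G ` fsupp m2" using gp1 gp2 unfolding goodpair_def by auto
  have "(((m1,n1),g1,x1),((m2,n2),g2,x2)) \<in> Trel G c \<longleftrightarrow> x1 = x2 \<and>
     (\<exists>U. compact U \<and> open U \<and> U \<subseteq> G0 \<and> x1 \<in> U \<and> conv G (conv G m1 (indicator U)) n2 \<in> diag G)"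
    unfolding Trel_def using t1 t2 by simp
  also have "\<dots> \<longleftrightarrow> x1 = x2 \<and> pt m1 x1 = pt m2 x2"
  proof (cases "x1 = x2")
    case False thus ?thesis by simp
  next
    case True
    define x where "x = x1"
    have p1: "pt m1 x \<in> fsupp m1" "sr G (pt m1 x) = x" using T_pt[OF t1 gX] unfolding x_def by auto
    have p2: "pt m2 x \<in> fsupp m2" "sr G (pt m2 x) = x" using T_pt[OF t2 gX] True unfolding x_def by auto
    have "(\<exists>U. compact U \<and> open U \<and> U \<subseteq> G0 \<and> x \<in> U \<and> conv G (conv G m1 (indicator U)) n2 \<in> diag G)
          \<longleftrightarrow> pt m1 x = pt m2 x"
    proof
      assume "\<exists>U. compact U \<and> open U \<and> U \<subseteq> G0 \<and> x \<in> U \<and> conv G (conv G m1 (indicator U)) n2 \<in> diag G"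
      then obtain U where U: "compact U" "open U" "U \<subseteq> G0" "x \<in> U"
        "conv G (conv G m1 (indicator U)) n2 \<in> diag G" by blast
      define f where "f = conv G m1 (indicator U :: 'g \<Rightarrow> 'r)"
      have Us: "fsupp (indicator U :: 'g \<Rightarrow> 'r) \<subseteq> G0" using U(3) by (simp add: fsupp_indicator)
      have rf: "rinj f" unfolding f_def using rinj_conv[OF r1 rinj_units[OF Us]] .
      have "f (pt m1 x) = m1 (pt m1 x)" unfolding f_def using conv_unit_right[OF Us] p1 U(4) by simp
      hence fne: "f (pt m1 x) \<noteq> 0" using p1 by simp
      have nne: "n2 (iv G (pt m2 x)) \<noteq> 0" using e2 p2 by auto
      have comp: "sr G (pt m1 x) = rg G (iv G (pt m2 x))" using p1 p2 by simp
      have "conv G f n2 (mu G (pt m1 x) (iv G (pt m2 x))) = f (pt m1 x) * n2 (iv G (pt m2 x))"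
        using conv_prod_at[OF rf fne comp] .
      hence "conv G f n2 (mu G (pt m1 x) (iv G (pt m2 x))) \<noteq> 0" using fne nne by simp
      hence "mu G (pt m1 x) (iv G (pt m2 x)) \<in> G0" using U(5) diag_supp unfolding f_def by fastforce
      hence "pt m1 x = iv G (iv G (pt m2 x))" using unit_mu_eq[OF comp] by blast
      thus "pt m1 x = pt m2 x" by simp
    next
      assume eq: "pt m1 x = pt m2 x"
      define Ob where "Ob = fsupp m1 \<inter> fsupp m2"
      have oOb: "open Ob" unfolding Ob_def using st_open st1 st2 by blast
      have xO: "x \<in> sr G ` Ob" unfolding Ob_def using p1 p2 eq by (metis IntI image_eqI)
      obtain U where U: "compact U" "openin (top_of_set G0) U" "x \<in> U" "U \<subseteq> sr G ` Ob"
        using ample_basis[OF lh_open_map[OF lh_s oOb] xO] by blast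
      have Uo: "open U" using U(2) openin_G0_open by blast
      have UG: "U \<subseteq> G0" using U(4) by auto
      define f where "f = conv G m1 (indicator U :: 'g \<Rightarrow> 'r)"
      have Us: "fsupp (indicator U :: 'g \<Rightarrow> 'r) \<subseteq> G0" using UG by (simp add: fsupp_indicator)
      have rf: "rinj f" unfolding f_def using rinj_conv[OF r1 rinj_units[OF Us]] .
      have sf: "f \<in> steinberg G" unfolding f_def using steinberg_conv[OF st1(1) indicator_steinberg[OF U(1) Uo] r1] .
      have "inv_pair (fsupp f) (fsupp n2)" unfolding inv_pair_def
      proof (intro ballI impI)
        fix a b assume a: "a \<in> fsupp f" and b: "b \<in> fsupp n2" and e: "rg G b = sr G a"
        have "f a = m1 a * indicator U (sr G a)" unfolding f_def using conv_unit_right[OF Us] .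
        hence a1: "m1 a \<noteq> 0" "sr G a \<in> U" using a by (auto simp: indicator_def split: if_splits)
        obtain a' where a': "a' \<in> Ob" "sr G a = sr G a'" using U(4) a1(2) by blast
        have "a' = a" using s1 a' a1(1) unfolding Ob_def by (metis IntD1 fsupp_iff inj_on_eq_iff)
        hence am2: "a \<in> fsupp m2" using a' unfolding Ob_def by blast
        obtain a2 where a2: "a2 \<in> fsupp m2" "b = iv G a2" using b e2 by blast
        have "sr G a2 = sr G a" using e a2 by simp
        hence "a2 = a" using s2 a2(1) am2 by (metis inj_on_eq_iff)
        thus "b = iv G a" using a2 by simp
      qed
      hence "conv G f n2 \<in> diag G" using inv_pair_diag[OF sf st2(2) rf] by blast
      thus "\<exists>U. compact U \<and> open U \<and> U \<subseteq> G0 \<and> x \<in> U \<and> conv G (conv G m1 (indicator U)) n2 \<in> diag G"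
        using U(1,3) Uo UG unfolding f_def by blast
    qed
    thus ?thesis using True unfolding x_def by simp
  qed
  finally show ?thesis .
qed

end


context ahc begin

lemma tuple4: obtains m n g x where "t = ((m,n),g,x)"
  by (metis prod.collapse)

lemma Trel_sub: "Trel G c \<subseteq> Tset G c \<times> Tset G c"
  unfolding Trel_def by auto

lemma Trel_iff':
  fixes t1 t2 :: "(('g \<Rightarrow> 'r::idom) \<times> ('g \<Rightarrow> 'r)) \<times> 'a \<times> 'g"
  assumes gX: "goodX X TYPE('r)" and t: "t1 \<in> Tset G c" "t2 \<in> Tset G c"
  shows "(t1,t2) \<in> Trel G c \<longleftrightarrow> snd (snd t1) = snd (snd t2)
           \<and> pt (fst (fst t1)) (snd (snd t1)) = pt (fst (fst t2)) (snd (snd t2))"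
proof -
  obtain m1 n1 g1 x1 where e1: "t1 = ((m1,n1),g1,x1)" by (rule tuple4)
  obtain m2 n2 g2 x2 where e2: "t2 = ((m2,n2),g2,x2)" by (rule tuple4)
  show ?thesis using Trel_iff[OF gX t(1)[unfolded e1] t(2)[unfolded e2]] unfolding e1 e2 by simp
qed

lemma equiv_T:
  assumes gX: "goodX X TYPE('r::idom)"
  shows "equiv (Tset G c :: ((('g \<Rightarrow> 'r) \<times> ('g \<Rightarrow> 'r)) \<times> 'a \<times> 'g) set) (Trel G c)"
proof (rule equivI)
  show "Trel G c \<subseteq> (Tset G c :: ((('g \<Rightarrow> 'r) \<times> ('g \<Rightarrow> 'r)) \<times> 'a \<times> 'g) set) \<times> Tset G c" by (rule Trel_sub)
  show "refl_on (Tset G c :: ((('g \<Rightarrow> 'r) \<times> ('g \<Rightarrow> 'r)) \<times> 'a \<times> 'g) set) (Trel G c)"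
    unfolding refl_on_def using Trel_iff'[OF gX] by blast
  show "sym (Trel G c :: ((('g \<Rightarrow> 'r) \<times> ('g \<Rightarrow> 'r)) \<times> 'a \<times> 'g) rel)"
  proof (rule symI)
    fix t1 t2 :: "(('g \<Rightarrow> 'r) \<times> ('g \<Rightarrow> 'r)) \<times> 'a \<times> 'g"
    assume h: "(t1,t2) \<in> Trel G c"
    hence "t1 \<in> Tset G c" "t2 \<in> Tset G c" using Trel_sub by blast+
    thus "(t2,t1) \<in> Trel G c" using h Trel_iff'[OF gX] by metis
  qed
  show "trans (Trel G c :: ((('g \<Rightarrow> 'r) \<times> ('g \<Rightarrow> 'r)) \<times> 'a \<times> 'g) rel)"
  proof (rule transI)
    fix t1 t2 t3 :: "(('g \<Rightarrow> 'r) \<times> ('g \<Rightarrow> 'r)) \<times> 'a \<times> 'g"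
    assume h: "(t1,t2) \<in> Trel G c" "(t2,t3) \<in> Trel G c"
    hence "t1 \<in> Tset G c" "t2 \<in> Tset G c" "t3 \<in> Tset G c" using Trel_sub by blast+
    thus "(t1,t3) \<in> Trel G c" using h Trel_iff'[OF gX] by metis
  qed
qed

definition psi :: "((('g \<Rightarrow> 'r::zero) \<times> ('g \<Rightarrow> 'r)) \<times> 'a \<times> 'g) set \<Rightarrow> 'g" where
  "psi w = pt (fst (fst (SOME t. t \<in> w))) (snd (snd (SOME t. t \<in> w)))"

lemma psi_class:
  fixes m n :: "'g \<Rightarrow> 'r::idom"
  assumes gX: "goodX X TYPE('r)" and t: "((m,n),g,x) \<in> Tset G c"
  shows "psi (Trel G c `` {((m,n),g,x)}) = pt m x"
proof -
  let ?w = "Trel G c `` {((m,n),g,x)}"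
  have "((m,n),g,x) \<in> ?w" using equiv_class_self[OF equiv_T[OF gX] t] .
  hence "(SOME t. t \<in> ?w) \<in> ?w" by (rule someI)
  hence rel: "(((m,n),g,x), SOME t. t \<in> ?w) \<in> Trel G c" by simp
  hence "(SOME t. t \<in> ?w) \<in> Tset G c" using Trel_sub by blast
  hence "snd (snd (SOME t. t \<in> ?w)) = x \<and> pt (fst (fst (SOME t. t \<in> ?w))) (snd (snd (SOME t. t \<in> ?w))) = pt m x"
    using Trel_iff'[OF gX t] rel by auto
  hence "pt (fst (fst (SOME t. t \<in> ?w))) (snd (snd (SOME t. t \<in> ?w))) = pt m x" by (rule conjunct2)
  thus ?thesis unfolding psi_def .
qed

lemma inv_pair_iv: assumes "inj_on (sr G) A" shows "inv_pair A (iv G ` A)"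
  unfolding inv_pair_def
proof (intro ballI impI)
  fix a b assume a: "a \<in> A" and b: "b \<in> iv G ` A" and e: "rg G b = sr G a"
  obtain a' where a': "a' \<in> A" "b = iv G a'" using b by blast
  have "sr G a' = sr G a" using e a' by simp
  hence "a' = a" using assms a a'(1) by (simp add: inj_on_eq_iff)
  thus "b = iv G a" using a' by simp
qed

lemma triple1:
  fixes f h :: "'g \<Rightarrow> 'r::comm_ring_1"
  assumes rf: "rinj f" and ip: "inv_pair (fsupp f) (fsupp h)" and one: "\<And>a. f a \<noteq> 0 \<Longrightarrow> f a * h (iv G a) = 1"
  shows "conv G (conv G f h) f = f"
proof
  fix \<zeta>
  have Ps: "fsupp (conv G f h) \<subseteq> G0" using inv_pair_supp[OF rf ip] .
  have "conv G (conv G f h) f \<zeta> = conv G f h (rg G \<zeta>) * f \<zeta>" using conv_unit_left[OF Ps] .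
  moreover have "conv G f h (rg G \<zeta>) = 1" if "f \<zeta> \<noteq> 0"
    using conv_prod_at[OF rf that, of "iv G \<zeta>" h] one[OF that] by simp
  ultimately show "conv G (conv G f h) f \<zeta> = f \<zeta>" by (cases "f \<zeta> = 0") auto
qed

lemma rinj_ind: "inj_on (rg G) A \<Longrightarrow> rinj (indicator A :: 'g \<Rightarrow> 'r::comm_ring_1)"
  unfolding rinj_def fsupp_indicator by (auto dest: inj_onD)

lemma ind_normaliser:
  assumes A: "compact A" "open A" "inj_on (rg G) A" "inj_on (sr G) A"
  shows "normaliser G (indicator A :: 'g \<Rightarrow> 'r::comm_ring_1) (indicator (iv G ` A))"
proof -
  define B where "B = iv G ` A"
  have B: "compact B" "open B" using compact_iv open_iv A unfolding B_def by auto
  have BA: "iv G ` B = A" unfolding B_def by (simp add: image_image)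
  have Br: "inj_on (rg G) B" unfolding B_def using A(4) by (auto simp: inj_on_def)
  have Bs: "inj_on (sr G) B" unfolding B_def using A(3) by (auto simp: inj_on_def)
  let ?a = "indicator A :: 'g \<Rightarrow> 'r" and ?b = "indicator B :: 'g \<Rightarrow> 'r"
  have sa: "?a \<in> steinberg G" and sb: "?b \<in> steinberg G" using indicator_steinberg A B by auto
  have ra: "rinj ?a" and rb: "rinj ?b" using rinj_ind A(3) Br by auto
  have ipab: "inv_pair (fsupp ?a) (fsupp ?b)" using inv_pair_iv[OF A(4)] unfolding B_def fsupp_indicator .
  have ipba: "inv_pair (fsupp ?b) (fsupp ?a)" using inv_pair_iv[OF Bs] BA unfolding fsupp_indicator by simp
  show ?thesis unfolding normaliser_def B_def[symmetric]
  proof (intro conjI ballI)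
    show "?a \<in> steinberg G" "?b \<in> steinberg G" by fact+
    fix d :: "'g \<Rightarrow> 'r" assume d: "d \<in> diag G"
    show "conv G (conv G ?a d) ?b \<in> diag G" using inv_pair_sandwich[OF sa sb ra ipab d] .
    show "conv G (conv G ?b d) ?a \<in> diag G" using inv_pair_sandwich[OF sb sa rb ipba d] .
  next
    show "conv G (conv G ?a ?b) ?a = ?a"
    proof (rule triple1[OF ra ipab])
      fix a assume "?a a \<noteq> 0"
      hence "a \<in> A" by (simp add: indicator_def split: if_splits)
      hence "iv G a \<in> B" unfolding B_def by simp
      thus "?a a * ?b (iv G a) = 1" using \<open>a \<in> A\<close> by simp
    qed
    show "conv G (conv G ?b ?a) ?b = ?b"
    proof (rule triple1[OF rb ipba])
      fix a assume "?b a \<noteq> 0"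
      hence "a \<in> B" by (simp add: indicator_def split: if_splits)
      hence "iv G a \<in> A" using BA by blast
      thus "?b a * ?a (iv G a) = 1" using \<open>a \<in> B\<close> by simp
    qed
  qed
qed

lemma ind_T:
  assumes A: "compact A" "open A" "inj_on (rg G) A" "inj_on (sr G) A" and e: "\<eta> \<in> A" "A \<subseteq> c -` {c \<eta>}"
  shows "((indicator A :: 'g \<Rightarrow> 'r::comm_ring_1, indicator (iv G ` A)), c \<eta>, sr G \<eta>) \<in> Tset G c"
    "pt (indicator A :: 'g \<Rightarrow> 'r) (sr G \<eta>) = \<eta>"
proof -
  have sa: "(indicator A :: 'g \<Rightarrow> 'r) \<in> steinberg G" using indicator_steinberg A by auto
  have sb: "(indicator (iv G ` A) :: 'g \<Rightarrow> 'r) \<in> steinberg G"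
    using indicator_steinberg compact_iv open_iv A by auto
  have hb: "iv G ` A \<subseteq> c -` {- c \<eta>}" using e(2) c_iv by auto
  have "((indicator A :: 'g \<Rightarrow> 'r), indicator (iv G ` A)) \<in> normalisers G c (c \<eta>)"
    unfolding normalisers_def homog_def using ind_normaliser[OF A] sa sb e(2) hb
    by (simp add: fsupp_indicator)
  moreover have "sr G \<eta> \<in> sr G ` fsupp (indicator A :: 'g \<Rightarrow> 'r)" using e(1) by (simp add: fsupp_indicator)
  ultimately show "((indicator A :: 'g \<Rightarrow> 'r, indicator (iv G ` A)), c \<eta>, sr G \<eta>) \<in> Tset G c"
    using Tset_iff by blast
  show "pt (indicator A :: 'g \<Rightarrow> 'r) (sr G \<eta>) = \<eta>"
    using pt_eq[of "indicator A :: 'g \<Rightarrow> 'r" \<eta> "sr G \<eta>"] A(4) e(1) by (simp add: fsupp_indicator)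
qed

end


context ahc begin

lemma psi_inj:
  assumes gX: "goodX X TYPE('r::idom)"
  shows "inj_on (psi :: _ \<Rightarrow> 'g) ((Tset G c :: ((('g \<Rightarrow> 'r) \<times> ('g \<Rightarrow> 'r)) \<times> 'a \<times> 'g) set) // Trel G c)"
proof (rule inj_onI)
  fix w1 w2 :: "((('g \<Rightarrow> 'r) \<times> ('g \<Rightarrow> 'r)) \<times> 'a \<times> 'g) set"
  assume w1: "w1 \<in> Tset G c // Trel G c" and w2: "w2 \<in> Tset G c // Trel G c" and e: "psi w1 = psi w2"
  obtain t1 where t1: "w1 = Trel G c `` {t1}" "t1 \<in> Tset G c" using w1 by (rule quotientE)
  obtain t2 where t2: "w2 = Trel G c `` {t2}" "t2 \<in> Tset G c" using w2 by (rule quotientE)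
  obtain m1 n1 g1 x1 where e1: "t1 = ((m1,n1),g1,x1)" by (rule tuple4)
  obtain m2 n2 g2 x2 where e2: "t2 = ((m2,n2),g2,x2)" by (rule tuple4)
  have T1: "((m1,n1),g1,x1) \<in> Tset G c" and T2: "((m2,n2),g2,x2) \<in> Tset G c" using t1 t2 e1 e2 by auto
  have "pt m1 x1 = pt m2 x2" using e psi_class[OF gX T1] psi_class[OF gX T2] t1 t2 e1 e2 by simp
  moreover hence "x1 = x2" using T_pt(2)[OF T1 gX] T_pt(2)[OF T2 gX] by metis
  ultimately have "(t1,t2) \<in> Trel G c" using Trel_iff[OF gX T1 T2] e1 e2 by simp
  thus "w1 = w2" using t1 t2 equiv_class_eq_iff[OF equiv_T[OF gX]] by blast
qed

lemma psi_onto: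
  assumes gX: "goodX X TYPE('r::idom)"
  shows "\<eta> \<in> (psi :: _ \<Rightarrow> 'g) ` ((Tset G c :: ((('g \<Rightarrow> 'r) \<times> ('g \<Rightarrow> 'r)) \<times> 'a \<times> 'g) set) // Trel G c)"
proof -
  obtain A where A: "compact A" "open A" "\<eta> \<in> A" "A \<subseteq> c -` {c \<eta>}" "inj_on (rg G) A" "inj_on (sr G) A"
    using basis[OF c_open[of "c \<eta>"]] by auto
  let ?t = "((indicator A :: 'g \<Rightarrow> 'r, indicator (iv G ` A)), c \<eta>, sr G \<eta>)"
  have t: "?t \<in> Tset G c" and p: "pt (indicator A :: 'g \<Rightarrow> 'r) (sr G \<eta>) = \<eta>"
    using ind_T[OF A(1,2,5,6,3,4)] by auto
  have "psi (Trel G c `` {?t}) = \<eta>" using psi_class[OF gX t] p by simp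
  moreover have "Trel G c `` {?t} \<in> Tset G c // Trel G c" using t by (rule quotientI)
  ultimately show ?thesis by (metis imageI)
qed

lemma psi_bij:
  assumes gX: "goodX X TYPE('r::idom)"
  shows "bij_betw (psi :: _ \<Rightarrow> 'g) ((Tset G c :: ((('g \<Rightarrow> 'r) \<times> ('g \<Rightarrow> 'r)) \<times> 'a \<times> 'g) set) // Trel G c) UNIV"
  unfolding bij_betw_def using psi_inj[OF gX] psi_onto[OF gX] by blast

end


context ahc begin

lemma part_b:
  assumes gX: "goodX X TYPE('r::idom)"
  shows "\<forall>m n g x. ((m,n),g,x) \<in> (Tset G c :: ((('g \<Rightarrow> 'r) \<times> ('g \<Rightarrow> 'r)) \<times> 'a \<times> 'g) set) \<longrightarrow>
            psi (Trel G c `` {((m,n),g,x)}) \<in> fsupp m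
          \<and> sr G (psi (Trel G c `` {((m,n),g,x)})) = x"
  using psi_class[OF gX] T_pt[OF _ gX] by simp

lemma part_c:
  assumes gX: "goodX X TYPE('r::idom)"
  shows "\<forall>\<eta> A. cobis G A \<and> \<eta> \<in> A \<and> c ` A = {c \<eta>} \<longrightarrow>
            ((indicator A :: 'g \<Rightarrow> 'r, indicator (iv G ` A) :: 'g \<Rightarrow> 'r), c \<eta>, sr G \<eta>) \<in> Tset G c
          \<and> psi (Trel G c `` {((indicator A :: 'g \<Rightarrow> 'r, indicator (iv G ` A)), c \<eta>, sr G \<eta>)}) = \<eta>"
proof (intro allI impI)
  fix \<eta> A assume h: "cobis G A \<and> \<eta> \<in> A \<and> c ` A = {c \<eta>}"
  have A: "compact A" "open A" "inj_on (rg G) A" "inj_on (sr G) A" using cobisD h by auto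
  have sub: "A \<subseteq> c -` {c \<eta>}" using h by auto
  have t: "((indicator A :: 'g \<Rightarrow> 'r, indicator (iv G ` A)), c \<eta>, sr G \<eta>) \<in> Tset G c"
    and p: "pt (indicator A :: 'g \<Rightarrow> 'r) (sr G \<eta>) = \<eta>" using ind_T[OF A _ sub] h by auto
  show "((indicator A :: 'g \<Rightarrow> 'r, indicator (iv G ` A) :: 'g \<Rightarrow> 'r), c \<eta>, sr G \<eta>) \<in> Tset G c
          \<and> psi (Trel G c `` {((indicator A :: 'g \<Rightarrow> 'r, indicator (iv G ` A)), c \<eta>, sr G \<eta>)}) = \<eta>"
    using t p psi_class[OF gX t] by simp
qed

lemma norm_swap: "(m,n) \<in> normalisers G c g \<Longrightarrow> (n,m) \<in> normalisers G c (- g)"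
  unfolding normalisers_def using normaliser_sym by auto

lemma part_d:
  assumes gX: "goodX X TYPE('r::idom)"
  shows "\<forall>m n g x. ((m,n),g,x) \<in> (Tset G c :: ((('g \<Rightarrow> 'r) \<times> ('g \<Rightarrow> 'r)) \<times> 'a \<times> 'g) set) \<longrightarrow>
            iv G (psi (Trel G c `` {((m,n),g,x)}))
              = psi (Trel G c `` {((n,m), - g, alpha G (fsupp m) x)})"
proof (intro allI impI)
  fix m n :: "'g \<Rightarrow> 'r" and g x
  assume t: "((m,n),g,x) \<in> Tset G c"
  have gp: "goodpair m n" using T_good[OF t gX] .
  have p: "pt m x \<in> fsupp m" "sr G (pt m x) = x" using T_pt[OF t gX] by auto
  have ivn: "iv G (pt m x) \<in> fsupp n" using gp p unfolding goodpair_def by blast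
  have sn: "inj_on (sr G) (fsupp n)" using gp unfolding goodpair_def by blast
  have "(n,m) \<in> normalisers G c (- g)" using t Tset_iff norm_swap by blast
  moreover have "alpha G (fsupp m) x \<in> sr G ` fsupp n" unfolding alpha_pt using ivn
    by (metis r_iv s_iv image_eqI iv_iv)
  ultimately have t': "((n,m), - g, alpha G (fsupp m) x) \<in> Tset G c" using Tset_iff by blast
  have "pt n (alpha G (fsupp m) x) = iv G (pt m x)"
    unfolding alpha_pt by (rule pt_eq[OF sn ivn]) simp
  thus "iv G (psi (Trel G c `` {((m,n),g,x)})) = psi (Trel G c `` {((n,m), - g, alpha G (fsupp m) x)})"
    using psi_class[OF gX t] psi_class[OF gX t'] by simp
qed

lemma part_f:
  assumes gX: "goodX X TYPE('r::idom)"
  shows "\<forall>m n g x. ((m,n),g,x) \<in> (Tset G c :: ((('g \<Rightarrow> 'r) \<times> ('g \<Rightarrow> 'r)) \<times> 'a \<times> 'g) set) \<longrightarrow>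
            c (psi (Trel G c `` {((m,n),g,x)})) = g"
proof (intro allI impI)
  fix m n :: "'g \<Rightarrow> 'r" and g x
  assume t: "((m,n),g,x) \<in> Tset G c"
  have "fsupp m \<subseteq> c -` {g}" using t Tset_iff unfolding normalisers_def homog_def by blast
  thus "c (psi (Trel G c `` {((m,n),g,x)})) = g" using psi_class[OF gX t] T_pt(1)[OF t gX] by auto
qed

end


context ahc begin

lemma part_e:
  assumes gX: "goodX X TYPE('r::idom)"
  shows "\<forall>m1 n1 g1 x1 m2 n2 g2 x2.
            ((m1,n1),g1,x1) \<in> (Tset G c :: ((('g \<Rightarrow> 'r) \<times> ('g \<Rightarrow> 'r)) \<times> 'a \<times> 'g) set)
          \<and> ((m2,n2),g2,x2) \<in> (Tset G c :: ((('g \<Rightarrow> 'r) \<times> ('g \<Rightarrow> 'r)) \<times> 'a \<times> 'g) set) \<longrightarrow>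
            (sr G (psi (Trel G c `` {((m1,n1),g1,x1)})) = rg G (psi (Trel G c `` {((m2,n2),g2,x2)}))
               \<longleftrightarrow> x1 = alpha G (fsupp m2) x2)
          \<and> (x1 = alpha G (fsupp m2) x2 \<longrightarrow>
               ((conv G m1 m2, conv G n2 n1), g1 + g2, x2) \<in> Tset G c
             \<and> mu G (psi (Trel G c `` {((m1,n1),g1,x1)})) (psi (Trel G c `` {((m2,n2),g2,x2)}))
                 = psi (Trel G c `` {((conv G m1 m2, conv G n2 n1), g1 + g2, x2)}))"
proof (intro allI impI, elim conjE)
  fix m1 n1 m2 n2 :: "'g \<Rightarrow> 'r" and g1 g2 x1 x2
  assume t1: "((m1,n1),g1,x1) \<in> Tset G c" and t2: "((m2,n2),g2,x2) \<in> Tset G c"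
  define \<eta>1 where "\<eta>1 = pt m1 x1"
  define \<eta>2 where "\<eta>2 = pt m2 x2"
  have p1: "\<eta>1 \<in> fsupp m1" "sr G \<eta>1 = x1" using T_pt[OF t1 gX] unfolding \<eta>1_def by auto
  have p2: "\<eta>2 \<in> fsupp m2" "sr G \<eta>2 = x2" using T_pt[OF t2 gX] unfolding \<eta>2_def by auto
  have ps1: "psi (Trel G c `` {((m1,n1),g1,x1)}) = \<eta>1" using psi_class[OF gX t1] \<eta>1_def by simp
  have ps2: "psi (Trel G c `` {((m2,n2),g2,x2)}) = \<eta>2" using psi_class[OF gX t2] \<eta>2_def by simp
  have al: "alpha G (fsupp m2) x2 = rg G \<eta>2" unfolding alpha_pt \<eta>2_def ..
  show "(sr G (psi (Trel G c `` {((m1,n1),g1,x1)})) = rg G (psi (Trel G c `` {((m2,n2),g2,x2)}))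
               \<longleftrightarrow> x1 = alpha G (fsupp m2) x2) \<and>
        (x1 = alpha G (fsupp m2) x2 \<longrightarrow>
               ((conv G m1 m2, conv G n2 n1), g1 + g2, x2) \<in> Tset G c
             \<and> mu G (psi (Trel G c `` {((m1,n1),g1,x1)})) (psi (Trel G c `` {((m2,n2),g2,x2)}))
                 = psi (Trel G c `` {((conv G m1 m2, conv G n2 n1), g1 + g2, x2)}))"
  proof (intro conjI impI)
    show "(sr G (psi (Trel G c `` {((m1,n1),g1,x1)})) = rg G (psi (Trel G c `` {((m2,n2),g2,x2)}))
               \<longleftrightarrow> x1 = alpha G (fsupp m2) x2)" using ps1 ps2 p1 al by simp
    assume "x1 = alpha G (fsupp m2) x2"
    hence comp: "sr G \<eta>1 = rg G \<eta>2" using p1 al by simp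
    have gp1: "goodpair m1 n1" and gp2: "goodpair m2 n2" using T_good[OF t1 gX] T_good[OF t2 gX] by auto
    have nm: "normaliser G (conv G m1 m2) (conv G n2 n1)" using prod_normaliser[OF gp1 gp2] .
    have st: "conv G m1 m2 \<in> steinberg G" "conv G n2 n1 \<in> steinberg G" using norm_st nm by auto
    have h1: "fsupp m1 \<subseteq> c -` {g1}" "fsupp n1 \<subseteq> c -` {-g1}" using t1[unfolded Tset_iff normalisers_def homog_def] by auto
    have h2: "fsupp m2 \<subseteq> c -` {g2}" "fsupp n2 \<subseteq> c -` {-g2}" using t2[unfolded Tset_iff normalisers_def homog_def] by auto
    have hm: "fsupp (conv G m1 m2) \<subseteq> c -` {g1 + g2}"
    proof
      fix x assume "x \<in> fsupp (conv G m1 m2)"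
      hence "x \<in> setmul (fsupp m1) (fsupp m2)" using supp_conv by blast
      then obtain a b where ab: "a \<in> fsupp m1" "b \<in> fsupp m2" "sr G a = rg G b" "x = mu G a b" by (rule setmulE)
      have "c a = g1" "c b = g2" using h1(1) h2(1) ab(1,2) by blast+
      thus "x \<in> c -` {g1 + g2}" using c_mu[OF ab(3)] ab(4) by simp
    qed
    have hn: "fsupp (conv G n2 n1) \<subseteq> c -` {- (g1 + g2)}"
    proof
      fix x assume "x \<in> fsupp (conv G n2 n1)"
      hence "x \<in> setmul (fsupp n2) (fsupp n1)" using supp_conv by blast
      then obtain a b where ab: "a \<in> fsupp n2" "b \<in> fsupp n1" "sr G a = rg G b" "x = mu G a b" by (rule setmulE)
      have "c a = - g2" "c b = - g1" using h1(2) h2(2) ab(1,2) by blast+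
      thus "x \<in> c -` {- (g1 + g2)}" using c_mu[OF ab(3)] ab(4) by (simp add: minus_add)
    qed
    have rm1: "rinj m1" using goodpair_rinj gp1 by auto
    have val: "conv G m1 m2 (mu G \<eta>1 \<eta>2) = m1 \<eta>1 * m2 \<eta>2"
      using conv_prod_at[OF rm1 _ comp] p1 by simp
    hence vne: "mu G \<eta>1 \<eta>2 \<in> fsupp (conv G m1 m2)" using p1 p2 by simp
    have s12: "sr G (mu G \<eta>1 \<eta>2) = x2" using comp p2 by (simp add: s_mu)
    have "x2 \<in> sr G ` fsupp (conv G m1 m2)" using vne s12 by (metis imageI)
    moreover have "(conv G m1 m2, conv G n2 n1) \<in> normalisers G c (g1 + g2)"
      unfolding normalisers_def homog_def using nm st hm hn by simp
    ultimately show tp: "((conv G m1 m2, conv G n2 n1), g1 + g2, x2) \<in> Tset G c" using Tset_iff by blast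
    have "inj_on (sr G) (fsupp (conv G m1 m2))" using T_good[OF tp gX] unfolding goodpair_def by blast
    hence "pt (conv G m1 m2) x2 = mu G \<eta>1 \<eta>2" using pt_eq vne s12 by blast
    thus "mu G (psi (Trel G c `` {((m1,n1),g1,x1)})) (psi (Trel G c `` {((m2,n2),g2,x2)}))
                 = psi (Trel G c `` {((conv G m1 m2, conv G n2 n1), g1 + g2, x2)})"
      using ps1 ps2 psi_class[OF gX tp] by simp
  qed
qed

lemma part_g:
  assumes gX: "goodX X TYPE('r::idom)"
  shows "\<forall>g A. cobis G A \<and> A \<subseteq> c -` {g} \<longrightarrow>
            psi -` A \<inter> ((Tset G c :: ((('g \<Rightarrow> 'r) \<times> ('g \<Rightarrow> 'r)) \<times> 'a \<times> 'g) set) // Trel G c)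
              = {w \<in> (Tset G c :: ((('g \<Rightarrow> 'r) \<times> ('g \<Rightarrow> 'r)) \<times> 'a \<times> 'g) set) // Trel G c.
                   \<exists>m n x. ((m,n),g,x) \<in> (Tset G c :: ((('g \<Rightarrow> 'r) \<times> ('g \<Rightarrow> 'r)) \<times> 'a \<times> 'g) set)
                         \<and> w = Trel G c `` {((m,n),g,x)} \<and> fsupp m \<subseteq> A}"
proof (intro allI impI)
  fix g A assume h: "cobis G A \<and> A \<subseteq> c -` {g}"
  have A: "compact A" "open A" "inj_on (rg G) A" "inj_on (sr G) A" using cobisD h by auto
  show "psi -` A \<inter> ((Tset G c :: ((('g \<Rightarrow> 'r) \<times> ('g \<Rightarrow> 'r)) \<times> 'a \<times> 'g) set) // Trel G c)
              = {w \<in> (Tset G c :: ((('g \<Rightarrow> 'r) \<times> ('g \<Rightarrow> 'r)) \<times> 'a \<times> 'g) set) // Trel G c.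
                   \<exists>m n x. ((m,n),g,x) \<in> (Tset G c :: ((('g \<Rightarrow> 'r) \<times> ('g \<Rightarrow> 'r)) \<times> 'a \<times> 'g) set)
                         \<and> w = Trel G c `` {((m,n),g,x)} \<and> fsupp m \<subseteq> A}"
  proof (intro equalityI subsetI)
    fix w :: "((('g \<Rightarrow> 'r) \<times> ('g \<Rightarrow> 'r)) \<times> 'a \<times> 'g) set"
    assume w: "w \<in> psi -` A \<inter> (Tset G c // Trel G c)"
    define \<eta> where "\<eta> = psi w"
    have eA: "\<eta> \<in> A" using w \<eta>_def by simp
    hence ce: "c \<eta> = g" using h by auto
    have sub: "A \<subseteq> c -` {c \<eta>}" using h ce by simp
    let ?t = "((indicator A :: 'g \<Rightarrow> 'r, indicator (iv G ` A)), g, sr G \<eta>)"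
    have t: "?t \<in> Tset G c" and p: "pt (indicator A :: 'g \<Rightarrow> 'r) (sr G \<eta>) = \<eta>"
      using ind_T[OF A eA sub] ce by auto
    have q: "Trel G c `` {?t} \<in> Tset G c // Trel G c" using t by (rule quotientI)
    have "psi (Trel G c `` {?t}) = psi w" using psi_class[OF gX t] p \<eta>_def by simp
    hence "Trel G c `` {?t} = w" using psi_inj[OF gX] q w by (auto dest: inj_onD)
    moreover have "fsupp (indicator A :: 'g \<Rightarrow> 'r) \<subseteq> A" by (simp add: fsupp_indicator)
    ultimately show "w \<in> {w \<in> (Tset G c :: ((('g \<Rightarrow> 'r) \<times> ('g \<Rightarrow> 'r)) \<times> 'a \<times> 'g) set) // Trel G c.
                   \<exists>m n x. ((m,n),g,x) \<in> (Tset G c :: ((('g \<Rightarrow> 'r) \<times> ('g \<Rightarrow> 'r)) \<times> 'a \<times> 'g) set)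
                         \<and> w = Trel G c `` {((m,n),g,x)} \<and> fsupp m \<subseteq> A}"
      using t w by blast
  next
    fix w :: "((('g \<Rightarrow> 'r) \<times> ('g \<Rightarrow> 'r)) \<times> 'a \<times> 'g) set"
    assume w: "w \<in> {w \<in> (Tset G c :: ((('g \<Rightarrow> 'r) \<times> ('g \<Rightarrow> 'r)) \<times> 'a \<times> 'g) set) // Trel G c.
                   \<exists>m n x. ((m,n),g,x) \<in> (Tset G c :: ((('g \<Rightarrow> 'r) \<times> ('g \<Rightarrow> 'r)) \<times> 'a \<times> 'g) set)
                         \<and> w = Trel G c `` {((m,n),g,x)} \<and> fsupp m \<subseteq> A}"
    then obtain m n :: "'g \<Rightarrow> 'r" and x where mx: "((m,n),g,x) \<in> Tset G c" "w = Trel G c `` {((m,n),g,x)}" "fsupp m \<subseteq> A"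
      by blast
    have "psi w \<in> A" using psi_class[OF gX mx(1)] T_pt(1)[OF mx(1) gX] mx(2,3) by auto
    thus "w \<in> psi -` A \<inter> (Tset G c // Trel G c)" using w by blast
  qed
qed

end


theorem mainTheorem4:
  fixes G :: "('g::t2_space) gpd" and c :: "'g \<Rightarrow> 'a::group_add"
  assumes "classC G c TYPE('r::idom)"
  shows "equiv (Tset G c :: ((('g \<Rightarrow> 'r) \<times> ('g \<Rightarrow> 'r)) \<times> 'a \<times> 'g) set) (Trel G c)
   \<and> (\<exists>\<psi>. bij_betw \<psi> ((Tset G c :: ((('g \<Rightarrow> 'r) \<times> ('g \<Rightarrow> 'r)) \<times> 'a \<times> 'g) set) // Trel G c) UNIV
      \<and> (\<forall>m n g x. ((m,n),g,x) \<in> (Tset G c :: ((('g \<Rightarrow> 'r) \<times> ('g \<Rightarrow> 'r)) \<times> 'a \<times> 'g) set) \<longrightarrow>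
            \<psi> (Trel G c `` {((m,n),g,x)}) \<in> fsupp m
          \<and> sr G (\<psi> (Trel G c `` {((m,n),g,x)})) = x)
      \<and> (\<forall>\<eta> A. cobis G A \<and> \<eta> \<in> A \<and> c ` A = {c \<eta>} \<longrightarrow>
            ((indicator A :: 'g \<Rightarrow> 'r, indicator (iv G ` A) :: 'g \<Rightarrow> 'r), c \<eta>, sr G \<eta>) \<in> Tset G c
          \<and> \<psi> (Trel G c `` {((indicator A :: 'g \<Rightarrow> 'r, indicator (iv G ` A)), c \<eta>, sr G \<eta>)}) = \<eta>)
      \<and> (\<forall>m n g x. ((m,n),g,x) \<in> (Tset G c :: ((('g \<Rightarrow> 'r) \<times> ('g \<Rightarrow> 'r)) \<times> 'a \<times> 'g) set) \<longrightarrow>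
            iv G (\<psi> (Trel G c `` {((m,n),g,x)}))
              = \<psi> (Trel G c `` {((n,m), - g, alpha G (fsupp m) x)}))
      \<and> (\<forall>m1 n1 g1 x1 m2 n2 g2 x2.
            ((m1,n1),g1,x1) \<in> (Tset G c :: ((('g \<Rightarrow> 'r) \<times> ('g \<Rightarrow> 'r)) \<times> 'a \<times> 'g) set)
          \<and> ((m2,n2),g2,x2) \<in> (Tset G c :: ((('g \<Rightarrow> 'r) \<times> ('g \<Rightarrow> 'r)) \<times> 'a \<times> 'g) set) \<longrightarrow>
            (sr G (\<psi> (Trel G c `` {((m1,n1),g1,x1)})) = rg G (\<psi> (Trel G c `` {((m2,n2),g2,x2)}))
               \<longleftrightarrow> x1 = alpha G (fsupp m2) x2)
          \<and> (x1 = alpha G (fsupp m2) x2 \<longrightarrow>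
               ((conv G m1 m2, conv G n2 n1), g1 + g2, x2) \<in> Tset G c
             \<and> mu G (\<psi> (Trel G c `` {((m1,n1),g1,x1)})) (\<psi> (Trel G c `` {((m2,n2),g2,x2)}))
                 = \<psi> (Trel G c `` {((conv G m1 m2, conv G n2 n1), g1 + g2, x2)})))
      \<and> (\<forall>m n g x. ((m,n),g,x) \<in> (Tset G c :: ((('g \<Rightarrow> 'r) \<times> ('g \<Rightarrow> 'r)) \<times> 'a \<times> 'g) set) \<longrightarrow>
            c (\<psi> (Trel G c `` {((m,n),g,x)})) = g)
      \<and> (\<forall>g A. cobis G A \<and> A \<subseteq> c -` {g} \<longrightarrow>
            \<psi> -` A \<inter> ((Tset G c :: ((('g \<Rightarrow> 'r) \<times> ('g \<Rightarrow> 'r)) \<times> 'a \<times> 'g) set) // Trel G c)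
              = {w \<in> (Tset G c :: ((('g \<Rightarrow> 'r) \<times> ('g \<Rightarrow> 'r)) \<times> 'a \<times> 'g) set) // Trel G c.
                   \<exists>m n x. ((m,n),g,x) \<in> (Tset G c :: ((('g \<Rightarrow> 'r) \<times> ('g \<Rightarrow> 'r)) \<times> 'a \<times> 'g) set)
                         \<and> w = Trel G c `` {((m,n),g,x)} \<and> fsupp m \<subseteq> A}))"
proof -
  have cC: "ample_hausdorff G" "cont_cocycle G c"
    and ex: "\<exists>X. X \<subseteq> unit_space G \<and> unit_space G \<subseteq> closure X
          \<and> (\<forall>x\<in>X. grp_ring_good G (c -` {0} \<inter> {\<eta>. sr G \<eta> = x \<and> rg G \<eta> = x}) x TYPE('r))"
    using assms unfolding classC_def by auto
  have gp: "groupoid G" using cC(1) unfolding ample_hausdorff_def by blast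
  interpret ahc G c
    by (unfold_locales) (rule gp, rule cC(1), rule cC(2))
  obtain X where gX: "goodX X TYPE('r)"
    using ex unfolding goodX_def Hz_def by blast
  show ?thesis
    apply (rule conjI[OF equiv_T[OF gX]])
    apply (rule exI[of _ "psi :: ((('g \<Rightarrow> 'r) \<times> ('g \<Rightarrow> 'r)) \<times> 'a \<times> 'g) set \<Rightarrow> 'g"])
    apply (intro conjI)
          apply (rule psi_bij[OF gX])
         apply (rule part_b[OF gX])
        apply (rule part_c[OF gX])
       apply (rule part_d[OF gX])
      apply (rule part_e[OF gX])
     apply (rule part_f[OF gX])
    apply (rule part_g[OF gX])
    done
qed


end
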